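(* Let $\{\varphi_n\},\{\psi_n\}$ be biorthogonal sequences in a Hilbert space $\mathcal H$ forming a $(\mathcal D,\mathcal E)$-quasi basis for dense subspaces $\mathcal D,\mathcal E$ with $D_\psi\subseteq\mathcal D\subseteq D(\varphi)$, $D_\varphi\subseteq\mathcal E\subseteq D(\psi)$. Then there exists an ONB $\{f_n\}$ of $\mathcal H$ such that $\overline{T_{f,\varphi}|_{\mathcal D}}$ is a positive self-adjoint operator and $(\{f_n\},\overline{T_{f,\varphi}|_{\mathcal D}})$ is a constructing pair for the generalized Riesz system $\{\varphi_n\}$. Furthermore, $(\{f_n\},(\overline{T_{f,\varphi}|_{\mathcal D}})^{-1})$ is a constructing pair for the generalized Riesz system $\{\psi_n\}$.
   Context: Inner product linear in the first argument. Biorthogonal: $\langle\varphi_n,\psi_m\rangle=\delta_{nm}$. $D_\varphi,D_\psi$ are the linear spans; $D(\varphi)=\{x:\sum_n|\langle x,\varphi_n\rangle|^2<\infty\}$, similarly $D(\psi)$. The pair is a $(\mathcal D,\mathcal E)$-quasi basis if $\sum_k\langle x,\varphi_k\rangle\langle\psi_k,y\rangle=\langle x,y\rangle$ for all $x\in\mathcal D$, $y\in\mathcal E$. For an ONB $\{f_n\}$, $T_{f,\varphi}$ is the operator with domain $D(\varphi)$, $T_{f,\varphi}x=\sum_n\langle x,\varphi_n\rangle f_n$; bar denotes closure and $|_{\mathcal D}$ restriction. A constructing pair for a sequence $\{\chi_n\}$ is a pair $(\{f_n\},S)$ with $\{f_n\}$ an ONB and $S$ a densely defined closed operator with densely defined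 inverse such that $f_n\in D(S)\cap D((S^{-1})^* )$ and $Sf_n=\chi_n$ for all $n$; a sequence admitting one is a generalized Riesz system. *)

theory Defs
  imports "HOL-Analysis.Analysis"
begin

class complex_vector = real_vector +
  fixes scaleC :: "complex \<Rightarrow> 'a \<Rightarrow> 'a"  (infixr \<open>*\<^sub>C\<close> 75)
  assumes scaleC_add_right: "a *\<^sub>C (x + y) = a *\<^sub>C x + a *\<^sub>C y"
    and scaleC_add_left: "(a + b) *\<^sub>C x = a *\<^sub>C x + b *\<^sub>C x"
    and scaleC_scaleC: "a *\<^sub>C (b *\<^sub>C x) = (a * b) *\<^sub>C x"
    and scaleC_one: "1 *\<^sub>C x = x"
    and scaleR_scaleC: "scaleR r x = complex_of_real r *\<^sub>C x"

class complex_normed_vector = complex_vector + real_normed_vector +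
  assumes norm_scaleC: "norm (a *\<^sub>C x) = cmod a * norm x"

class complex_inner = complex_normed_vector +
  fixes cinner :: "'a \<Rightarrow> 'a \<Rightarrow> complex"
  assumes cinner_add_left: "cinner (x + y) z = cinner x z + cinner y z"
    and cinner_scaleC_left: "cinner (a *\<^sub>C x) y = a * cinner x y"
    and cinner_commute: "cinner y x = cnj (cinner x y)"
    and cinner_ge_zero: "0 \<le> Re (cinner x x)"
    and cinner_eq_zero_iff: "cinner x x = 0 \<longleftrightarrow> x = 0"
    and norm_eq_sqrt_cinner: "norm x = sqrt (Re (cinner x x))"

class chilbert_space = complex_inner + complete_space

definition csubspace :: "'a::complex_vector set \<Rightarrow> bool" where
  "csubspace S \<longleftrightarrow> 0 \<in> S \<and> (\<forall>x\<in>S. \<forall>y\<in>S. x + y \<in> S) \<and> (\<forall>c. \<forall>x\<in>S. c *\<^sub>C x \<in> S)"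

definition cspan :: "'a::complex_vector set \<Rightarrow> 'a set" where
  "cspan B = {\<Sum>b\<in>F. c b *\<^sub>C b | F c. finite F \<and> F \<subseteq> B}"

definition dense_set :: "'a::topological_space set \<Rightarrow> bool" where
  "dense_set S \<longleftrightarrow> closure S = UNIV"

definition orthonormal_basis :: "(nat \<Rightarrow> 'a::complex_inner) \<Rightarrow> bool" where
  "orthonormal_basis f \<longleftrightarrow>
     (\<forall>n m. cinner (f n) (f m) = (if n = m then 1 else 0)) \<and> dense_set (cspan (range f))"

definition biorthogonal :: "(nat \<Rightarrow> 'a::complex_inner) \<Rightarrow> (nat \<Rightarrow> 'a) \<Rightarrow> bool" where
  "biorthogonal \<phi> \<psi> \<longleftrightarrow> (\<forall>n m. cinner (\<phi> n) (\<psi> m) = (if n = m then 1 else 0))"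

definition seq_domain :: "(nat \<Rightarrow> 'a::complex_inner) \<Rightarrow> 'a set" where
  "seq_domain \<phi> = {x. summable (\<lambda>n. (cmod (cinner x (\<phi> n)))\<^sup>2)}"

definition quasi_basis :: "(nat \<Rightarrow> 'a::complex_inner) \<Rightarrow> (nat \<Rightarrow> 'a) \<Rightarrow> 'a set \<Rightarrow> 'a set \<Rightarrow> bool" where
  "quasi_basis \<phi> \<psi> D E \<longleftrightarrow>
     (\<forall>x\<in>D. \<forall>y\<in>E. (\<lambda>k. cinner x (\<phi> k) * cinner (\<psi> k) y) sums cinner x y)"

section \<open>(Unbounded) linear operators, represented by their graphs\<close>

type_synonym 'a lop = "('a \<times> 'a) set"

definition op_dom :: "'a lop \<Rightarrow> 'a set" where
  "op_dom T = fst ` T"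

definition op_range :: "'a lop \<Rightarrow> 'a set" where
  "op_range T = snd ` T"

definition is_operator :: "'a::complex_vector lop \<Rightarrow> bool" where
  "is_operator T \<longleftrightarrow>
     (0, 0) \<in> T \<and>
     (\<forall>x y u v. (x, y) \<in> T \<longrightarrow> (u, v) \<in> T \<longrightarrow> (x + u, y + v) \<in> T) \<and>
     (\<forall>c x y. (x, y) \<in> T \<longrightarrow> (c *\<^sub>C x, c *\<^sub>C y) \<in> T) \<and>
     (\<forall>y. (0, y) \<in> T \<longrightarrow> y = 0)"

definition op_inverse :: "'a lop \<Rightarrow> 'a lop" where
  "op_inverse T = {(y, x). (x, y) \<in> T}"

definition op_restrict :: "'a lop \<Rightarrow> 'a set \<Rightarrow> 'a lop" where
  "op_restrict T D = {(x, y). (x, y) \<in> T \<and> x \<in> D}"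

definition op_closure :: "'a::topological_space lop \<Rightarrow> 'a lop" where
  "op_closure T = closure T"

definition adjoint :: "'a::complex_inner lop \<Rightarrow> 'a lop" where
  "adjoint T = {(y, z). \<forall>x w. (x, w) \<in> T \<longrightarrow> cinner w y = cinner x z}"

definition densely_defined :: "'a::complex_inner lop \<Rightarrow> bool" where
  "densely_defined T \<longleftrightarrow> dense_set (op_dom T)"

definition closed_operator :: "'a::complex_inner lop \<Rightarrow> bool" where
  "closed_operator T \<longleftrightarrow> is_operator T \<and> closed T"

definition self_adjoint :: "'a::complex_inner lop \<Rightarrow> bool" where
  "self_adjoint T \<longleftrightarrow> is_operator T \<and> densely_defined T \<and> adjoint T = T"

definition positive_op :: "'a::complex_inner lop \<Rightarrow> bool" where
  "positive_op T \<longleftrightarrow> (\<forall>x y. (x, y) \<in> T \<longrightarrow> Im (cinner y x) = 0 \<and> 0 \<le> Re (cinner y x))"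

definition T_op :: "(nat \<Rightarrow> 'a::complex_inner) \<Rightarrow> (nat \<Rightarrow> 'a) \<Rightarrow> 'a lop" where
  "T_op f \<phi> = {(x, y). x \<in> seq_domain \<phi> \<and> (\<lambda>n. cinner x (\<phi> n) *\<^sub>C f n) sums y}"

definition constructing_pair :: "(nat \<Rightarrow> 'a::complex_inner) \<Rightarrow> (nat \<Rightarrow> 'a) \<Rightarrow> 'a lop \<Rightarrow> bool" where
  "constructing_pair chi f S \<longleftrightarrow>
     orthonormal_basis f \<and>
     closed_operator S \<and> densely_defined S \<and>
     is_operator (op_inverse S) \<and> densely_defined (op_inverse S) \<and>
     (\<forall>n. f n \<in> op_dom S \<inter> op_dom (adjoint (op_inverse S)) \<and> (f n, chi n) \<in> S)"

definition generalized_riesz_system :: "(nat \<Rightarrow> 'a::complex_inner) \<Rightarrow> bool" where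
  "generalized_riesz_system chi \<longleftrightarrow> (\<exists>f S. constructing_pair chi f S)"

end

theory Submission
  imports Defs "HOL-Computational_Algebra.Polynomial"
begin

context complex_vector
begin
lemma scaleC_zero_left [simp]: "0 *\<^sub>C x = 0"
proof -
  have "0 *\<^sub>C x = 0 *\<^sub>C x + 0 *\<^sub>C x" using scaleC_add_left[of 0 0 x] by simp
  then show ?thesis by simp
qed
lemma scaleC_zero_right [simp]: "a *\<^sub>C 0 = 0"
proof -
  have "a *\<^sub>C 0 = a *\<^sub>C 0 + a *\<^sub>C 0" using scaleC_add_right[of a 0 0] by simp
  then show ?thesis by simp
qed
lemma scaleC_minus_right: "a *\<^sub>C (- x) = - (a *\<^sub>C x)"
proof -
  have "a *\<^sub>C (- x) + a *\<^sub>C x = 0" by (simp flip: scaleC_add_right)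
  then show ?thesis by (simp add: eq_neg_iff_add_eq_0)
qed
lemma scaleC_minus_left: "(- a) *\<^sub>C x = - (a *\<^sub>C x)"
proof -
  have "(- a) *\<^sub>C x + a *\<^sub>C x = 0" by (simp flip: scaleC_add_left)
  then show ?thesis by (simp add: eq_neg_iff_add_eq_0)
qed
lemma scaleC_diff_right: "a *\<^sub>C (x - y) = a *\<^sub>C x - a *\<^sub>C y"
  using scaleC_add_right[of a x "- y"] by (simp add: scaleC_minus_right)
lemma scaleC_diff_left: "(a - b) *\<^sub>C x = a *\<^sub>C x - b *\<^sub>C x"
  using scaleC_add_left[of a "- b" x] by (simp add: scaleC_minus_left)
lemma scaleC_sum_right: "a *\<^sub>C (\<Sum>i\<in>A. f i) = (\<Sum>i\<in>A. a *\<^sub>C f i)"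
  by (induction A rule: infinite_finite_induct) (auto simp: scaleC_add_right)
lemma scaleC_sum_left: "(\<Sum>i\<in>A. f i) *\<^sub>C x = (\<Sum>i\<in>A. f i *\<^sub>C x)"
  by (induction A rule: infinite_finite_induct) (auto simp: scaleC_add_left)
lemma scaleC_one_simp [simp]: "1 *\<^sub>C x = x" by (rule scaleC_one)
lemma scaleC_scaleC_simp [simp]: "a *\<^sub>C (b *\<^sub>C x) = (a * b) *\<^sub>C x" by (rule scaleC_scaleC)
lemma scaleC_eq_0_iff: "a *\<^sub>C x = 0 \<longleftrightarrow> a = 0 \<or> x = 0"
proof
  assume h: "a *\<^sub>C x = 0"
  show "a = 0 \<or> x = 0"
  proof (cases "a = 0")
    case False
    then have "x = (inverse a * a) *\<^sub>C x" by simp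
    also have "\<dots> = inverse a *\<^sub>C (a *\<^sub>C x)" by simp
    finally show ?thesis using h by simp
  qed simp
qed auto
end

context complex_inner
begin

lemma cinner_zero_left [simp]: "cinner 0 y = 0"
  using cinner_add_left[of 0 0 y] by simp
lemma cinner_add_right: "cinner x (y + z) = cinner x y + cinner x z"
  by (metis cinner_add_left cinner_commute complex_cnj_add)
lemma cinner_zero_right [simp]: "cinner x 0 = 0"
  using cinner_add_right[of x 0 0] by simp
lemma cinner_scaleC_right: "cinner x (a *\<^sub>C y) = cnj a * cinner x y"
  by (metis cinner_commute cinner_scaleC_left complex_cnj_mult)
lemma cinner_minus_left: "cinner (- x) y = - cinner x y"
proof -
  have "- x = (-1) *\<^sub>C x" by (simp add: scaleC_minus_left)
  then show ?thesis by (simp add: cinner_scaleC_left)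
qed
lemma cinner_minus_right: "cinner x (- y) = - cinner x y"
proof -
  have "- y = (-1) *\<^sub>C y" by (simp add: scaleC_minus_left)
  then show ?thesis by (simp add: cinner_scaleC_right)
qed
lemma cinner_diff_left: "cinner (x - y) z = cinner x z - cinner y z"
  using cinner_add_left[of x "- y" z] by (simp add: cinner_minus_left)
lemma cinner_diff_right: "cinner x (y - z) = cinner x y - cinner x z"
  using cinner_add_right[of x y "- z"] by (simp add: cinner_minus_right)
lemma cinner_scaleR_left: "cinner (r *\<^sub>R x) y = complex_of_real r * cinner x y"
  by (simp add: scaleR_scaleC cinner_scaleC_left)
lemma cinner_scaleR_right: "cinner x (r *\<^sub>R y) = complex_of_real r * cinner x y"
  by (simp add: scaleR_scaleC cinner_scaleC_right)
lemma cinner_sum_left: "cinner (\<Sum>i\<in>A. f i) y = (\<Sum>i\<in>A. cinner (f i) y)"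
  by (induction A rule: infinite_finite_induct) (auto simp: cinner_add_left)
lemma cinner_sum_right: "cinner x (\<Sum>i\<in>A. f i) = (\<Sum>i\<in>A. cinner x (f i))"
  by (induction A rule: infinite_finite_induct) (auto simp: cinner_add_right)

lemma Im_cinner_self [simp]: "Im (cinner x x) = 0"
proof -
  have "Im (cinner x x) = Im (cnj (cinner x x))" using cinner_commute[of x x] by simp
  then show ?thesis by simp
qed
lemma cinner_self_real: "cinner x x = complex_of_real (Re (cinner x x))"
  by (simp add: complex_eq_iff)
lemma norm_sq_cinner: "(norm x)\<^sup>2 = Re (cinner x x)"
  by (simp add: norm_eq_sqrt_cinner cinner_ge_zero)
lemma cinner_self_norm: "cinner x x = complex_of_real ((norm x)\<^sup>2)"
  by (metis cinner_self_real norm_sq_cinner)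
lemma cmod_cinner_self: "cmod (cinner x x) = (norm x)\<^sup>2"
  by (simp add: cinner_self_norm norm_power)

lemma Cauchy_Schwarz: "cmod (cinner x y) \<le> norm x * norm y"
proof (cases "y = 0")
  case True then show ?thesis by simp
next
  case False
  define a where "a = cinner x y / cinner y y"
  have yy: "cinner y y = complex_of_real ((norm y)\<^sup>2)" by (rule cinner_self_norm)
  have ny: "norm y > 0" using False by simp
  have "0 \<le> Re (cinner (x - a *\<^sub>C y) (x - a *\<^sub>C y))" by (rule cinner_ge_zero)
  also have "cinner (x - a *\<^sub>C y) (x - a *\<^sub>C y)
      = cinner x x - cnj a * cinner x y - a * cinner y x + a * cnj a * cinner y y"
    by (simp add: cinner_diff_left cinner_diff_right cinner_scaleC_left cinner_scaleC_right algebra_simps)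
  also have "a * cnj a * cinner y y = cnj a * cinner x y"
    using ny by (simp add: a_def yy field_simps)
  finally have "0 \<le> Re (cinner x x - a * cinner y x)" by simp
  also have "a * cinner y x = complex_of_real ((cmod (cinner x y))\<^sup>2 / (norm y)\<^sup>2)"
  proof -
    have "a * cinner y x = cinner x y * cnj (cinner x y) / cinner y y"
      by (simp add: a_def cinner_commute[of y x])
    also have "\<dots> = complex_of_real ((cmod (cinner x y))\<^sup>2) / complex_of_real ((norm y)\<^sup>2)"
      by (simp only: yy complex_norm_square[symmetric] norm_of_real)
    finally show ?thesis by simp
  qed
  finally have "(cmod (cinner x y))\<^sup>2 / (norm y)\<^sup>2 \<le> (norm x)\<^sup>2"
    by (simp add: norm_sq_cinner)
  then have "(cmod (cinner x y))\<^sup>2 \<le> (norm x)\<^sup>2 * (norm y)\<^sup>2"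
    using ny by (simp add: field_simps)
  then have "(cmod (cinner x y))\<^sup>2 \<le> (norm x * norm y)\<^sup>2" by (simp add: power_mult_distrib)
  then show ?thesis by (rule power2_le_imp_le) simp
qed

lemma norm_add_sq: "(norm (x + y))\<^sup>2 = (norm x)\<^sup>2 + (norm y)\<^sup>2 + 2 * Re (cinner x y)"
proof -
  have "Re (cinner y x) = Re (cinner x y)" by (subst cinner_commute) simp
  then show ?thesis
    by (simp add: norm_sq_cinner cinner_add_left cinner_add_right)
qed

lemma norm_diff_sq: "(norm (x - y))\<^sup>2 = (norm x)\<^sup>2 + (norm y)\<^sup>2 - 2 * Re (cinner x y)"
  using norm_add_sq[of x "- y"] by (simp add: cinner_minus_right)

lemma pythagoras: "cinner x y = 0 \<Longrightarrow> (norm (x + y))\<^sup>2 = (norm x)\<^sup>2 + (norm y)\<^sup>2"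
  by (simp add: norm_add_sq)

lemma polarization:
  "4 * cinner x y = complex_of_real ((norm (x + y))\<^sup>2) - complex_of_real ((norm (x - y))\<^sup>2)
     + \<i> * complex_of_real ((norm (x + \<i> *\<^sub>C y))\<^sup>2) - \<i> * complex_of_real ((norm (x - \<i> *\<^sub>C y))\<^sup>2)"
proof -
  have e: "\<And>z. complex_of_real ((norm z)\<^sup>2) = cinner z z" by (simp add: cinner_self_norm)
  show ?thesis
    unfolding e
    by (simp add: cinner_add_left cinner_add_right cinner_diff_left cinner_diff_right
      cinner_scaleC_left cinner_scaleC_right algebra_simps)
qed

lemma cinner_eq_zero_all: "(\<And>y. cinner x y = 0) \<Longrightarrow> x = 0"
  using cinner_eq_zero_iff by blast


lemma cinner_ext: "(\<And>z. cinner x z = cinner y z) \<Longrightarrow> x = y"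
proof -
  assume h: "\<And>z. cinner x z = cinner y z"
  have "cinner (x - y) (x - y) = 0" by (simp add: cinner_diff_left h)
  then show ?thesis using cinner_eq_zero_iff by simp
qed

end

lemma bounded_bilinear_cinner: "bounded_bilinear (cinner :: 'a::complex_inner \<Rightarrow> 'a \<Rightarrow> complex)"
proof
  fix a a' b b' :: 'a and r :: real
  show "cinner (a + a') b = cinner a b + cinner a' b" by (rule cinner_add_left)
  show "cinner a (b + b') = cinner a b + cinner a b'" by (rule cinner_add_right)
  show "cinner (r *\<^sub>R a) b = r *\<^sub>R cinner a b" by (simp add: cinner_scaleR_left scaleR_conv_of_real)
  show "cinner a (r *\<^sub>R b) = r *\<^sub>R cinner a b" by (simp add: cinner_scaleR_right scaleR_conv_of_real)
next
  show "\<exists>K. \<forall>a b. norm (cinner a b) \<le> norm a * norm b * K"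
    by (rule exI[of _ 1]) (simp add: Cauchy_Schwarz)
qed

lemma tendsto_cinner [tendsto_intros]:
  "(f \<longlongrightarrow> (a::'a::complex_inner)) F \<Longrightarrow> (g \<longlongrightarrow> b) F \<Longrightarrow> ((\<lambda>n. cinner (f n) (g n)) \<longlongrightarrow> cinner a b) F"
  by (rule bounded_bilinear.tendsto[OF bounded_bilinear_cinner])

lemma continuous_on_cinner [continuous_intros]:
  "continuous_on S (f :: _ \<Rightarrow> 'a::complex_inner) \<Longrightarrow> continuous_on S g \<Longrightarrow> continuous_on S (\<lambda>x. cinner (f x) (g x))"
  by (rule bounded_bilinear.continuous_on[OF bounded_bilinear_cinner])

lemma bounded_bilinear_scaleC: "bounded_bilinear (scaleC :: complex \<Rightarrow> 'a::complex_normed_vector \<Rightarrow> 'a)"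
proof
  fix a a' :: complex and b b' :: 'a and r :: real
  show "(a + a') *\<^sub>C b = a *\<^sub>C b + a' *\<^sub>C b" by (rule scaleC_add_left)
  show "a *\<^sub>C (b + b') = a *\<^sub>C b + a *\<^sub>C b'" by (rule scaleC_add_right)
  show "(r *\<^sub>R a) *\<^sub>C b = r *\<^sub>R (a *\<^sub>C b)" by (simp add: scaleR_scaleC scaleR_conv_of_real)
  show "a *\<^sub>C (r *\<^sub>R b) = r *\<^sub>R (a *\<^sub>C b)" by (simp add: scaleR_scaleC mult.commute)
next
  show "\<exists>K. \<forall>a b. norm (a *\<^sub>C (b::'a)) \<le> norm a * norm b * K"
    by (rule exI[of _ 1]) (simp add: norm_scaleC)
qed

lemma tendsto_scaleC [tendsto_intros]:
  "(f \<longlongrightarrow> a) F \<Longrightarrow> (g \<longlongrightarrow> b) F \<Longrightarrow> ((\<lambda>n. f n *\<^sub>C (g n :: 'a::complex_normed_vector)) \<longlongrightarrow> a *\<^sub>C b) F"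
  by (rule bounded_bilinear.tendsto[OF bounded_bilinear_scaleC])

lemma scaleC_real_scaleR: "(complex_of_real r) *\<^sub>C (x::'a::complex_vector) = r *\<^sub>R x"
  by (simp add: scaleR_scaleC)

instance chilbert_space \<subseteq> banach ..


locale rip =
  fixes ip :: "'b::{real_normed_vector,complete_space} \<Rightarrow> 'b \<Rightarrow> real"
  assumes ip_add: "ip (x + y) z = ip x z + ip y z"
    and ip_scale: "ip (r *\<^sub>R x) y = r * ip x y"
    and ip_sym: "ip x y = ip y x"
    and ip_norm: "ip x x = (norm x)\<^sup>2"
begin

lemma ip_add_r: "ip z (x + y) = ip z x + ip z y"
  using ip_add ip_sym by metis
lemma ip_scale_r: "ip y (r *\<^sub>R x) = r * ip y x"
  using ip_scale ip_sym by metis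
lemma ip_minus: "ip (- x) y = - ip x y"
  using ip_scale[of "-1" x y] by simp
lemma ip_diff: "ip (x - y) z = ip x z - ip y z"
  using ip_add[of x "- y" z] ip_minus[of y z] by simp
lemma ip_diff_r: "ip z (x - y) = ip z x - ip z y"
  using ip_diff ip_sym by metis

lemma norm_diff_sq_ip: "(norm (x - y))\<^sup>2 = (norm x)\<^sup>2 + (norm y)\<^sup>2 - 2 * ip x y"
proof -
  have "(norm (x - y))\<^sup>2 = ip (x - y) (x - y)" by (simp add: ip_norm)
  also have "\<dots> = ip x x + ip y y - 2 * ip x y"
    by (simp add: ip_diff ip_diff_r ip_sym[of y x])
  finally show ?thesis by (simp add: ip_norm)
qed

lemma parallelogram: "(norm ((a::'b) + b))\<^sup>2 + (norm (a - b))\<^sup>2 = 2 * (norm a)\<^sup>2 + 2 * (norm b)\<^sup>2"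
proof -
  have "(norm (a + b))\<^sup>2 + (norm (a - b))\<^sup>2 = ip (a + b) (a + b) + ip (a - b) (a - b)"
    by (simp add: ip_norm)
  also have "\<dots> = 2 * ip a a + 2 * ip b b"
    by (simp add: ip_add ip_add_r ip_diff ip_diff_r ip_sym[of b a])
  finally show ?thesis by (simp add: ip_norm)
qed

theorem projection_exists:
  fixes M :: "'b set" and h :: 'b
  assumes cl: "closed M" and z: "0 \<in> M"
    and add: "\<And>x y. x \<in> M \<Longrightarrow> y \<in> M \<Longrightarrow> x + y \<in> M"
    and sc: "\<And>r x. x \<in> M \<Longrightarrow> r *\<^sub>R x \<in> M"
  shows "\<exists>p\<in>M. \<forall>m\<in>M. ip (h - p) m = 0"
proof -
  define S where "S = (\<lambda>m. (norm (h - m))\<^sup>2) ` M"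
  define d where "d = Inf S"
  have Sne: "S \<noteq> {}" using z by (auto simp: S_def)
  have Sbdd: "bdd_below S" by (auto simp: S_def bdd_below_def intro!: exI[of _ 0])
  have dle: "d \<le> (norm (h - m))\<^sup>2" if "m \<in> M" for m
    unfolding d_def using that Sbdd by (auto simp: S_def intro!: cInf_lower)
  have "\<exists>m\<in>M. (norm (h - m))\<^sup>2 < d + 1 / real (Suc n)" for n
  proof -
    have "d < d + 1 / real (Suc n)" by simp
    then obtain s where "s \<in> S" "s < d + 1 / real (Suc n)"
      using cInf_less_iff[OF Sne Sbdd] unfolding d_def by blast
    then show ?thesis by (auto simp: S_def)
  qed
  then obtain m where mM: "\<And>n. m n \<in> M" and md: "\<And>n. (norm (h - m n))\<^sup>2 < d + 1 / real (Suc n)"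
    by metis
  have mid: "(1/2) *\<^sub>R (m i + m j) \<in> M" for i j using add sc mM by blast
  have key: "(norm (m i - m j))\<^sup>2 \<le> 2 / real (Suc i) + 2 / real (Suc j)" for i j
  proof -
    have p: "(norm ((h - m i) + (h - m j)))\<^sup>2 + (norm ((h - m i) - (h - m j)))\<^sup>2
        = 2 * (norm (h - m i))\<^sup>2 + 2 * (norm (h - m j))\<^sup>2" by (rule parallelogram)
    have e1: "(h - m i) + (h - m j) = 2 *\<^sub>R (h - (1/2) *\<^sub>R (m i + m j))"
      by (simp add: algebra_simps scaleR_2)
    have "(norm ((h - m i) + (h - m j)))\<^sup>2 = 4 * (norm (h - (1/2) *\<^sub>R (m i + m j)))\<^sup>2"
      unfolding e1 by (simp add: power2_eq_square)
    moreover have "d \<le> (norm (h - (1/2) *\<^sub>R (m i + m j)))\<^sup>2" using dle mid by blast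
    moreover have "(h - m i) - (h - m j) = - (m i - m j)" by simp
    ultimately have "4 * d + (norm (m i - m j))\<^sup>2 \<le> 2 * (norm (h - m i))\<^sup>2 + 2 * (norm (h - m j))\<^sup>2"
      using p by (simp add: norm_minus_commute)
    then show ?thesis using md[of i] md[of j] by simp
  qed
  have C: "Cauchy m"
  proof (rule metric_CauchyI)
    fix e :: real assume e: "e > 0"
    obtain N where N: "4 / e\<^sup>2 < real N" using reals_Archimedean2 by blast
    show "\<exists>N. \<forall>i\<ge>N. \<forall>j\<ge>N. dist (m i) (m j) < e"
    proof (intro exI allI impI)
      fix i j assume i: "N \<le> i" and j: "N \<le> j"
      have e2: "e\<^sup>2 > 0" using e by simp
      have "4 / e\<^sup>2 < real (Suc i)" using N i by simp
      then have a: "2 / real (Suc i) < e\<^sup>2 / 2" using e2 by (simp add: field_simps)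
      have "4 / e\<^sup>2 < real (Suc j)" using N j by simp
      then have b: "2 / real (Suc j) < e\<^sup>2 / 2" using e2 by (simp add: field_simps)
      have "(dist (m i) (m j))\<^sup>2 < e\<^sup>2" using key[of i j] a b by (simp add: dist_norm)
      then show "dist (m i) (m j) < e" using e by (simp add: power_less_imp_less_base)
    qed
  qed
  then obtain p where mp: "m \<longlonglongrightarrow> p" using Cauchy_convergent_iff convergent_def by blast
  have pM: "p \<in> M" using closed_sequentially[OF cl mM mp] .
  have lim: "(\<lambda>n. (norm (h - m n))\<^sup>2) \<longlonglongrightarrow> (norm (h - p))\<^sup>2"
    by (intro tendsto_intros mp)
  have lim2: "(\<lambda>n. d + 1 / real (Suc n)) \<longlonglongrightarrow> d + 0"
    by (intro tendsto_intros LIMSEQ_inverse_real_of_nat[unfolded inverse_eq_divide])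
  have "(norm (h - p))\<^sup>2 \<le> d + 0"
    by (rule LIMSEQ_le[OF lim lim2]) (use md less_imp_le in blast)
  then have pmin: "(norm (h - p))\<^sup>2 \<le> (norm (h - q))\<^sup>2" if "q \<in> M" for q
    using dle[OF that] by linarith
  have "ip (h - p) m' = 0" if m'M: "m' \<in> M" for m'
  proof (rule ccontr)
    assume ne: "ip (h - p) m' \<noteq> 0"
    define a where "a = ip (h - p) m'"
    have nm: "m' \<noteq> 0" using ne by (auto simp: ip_scale_r[of _ 0 m', simplified])
    define t where "t = a / (norm m')\<^sup>2"
    have q: "p + t *\<^sub>R m' \<in> M" using add sc pM m'M by blast
    have "(norm (h - (p + t *\<^sub>R m')))\<^sup>2 = (norm ((h - p) - t *\<^sub>R m'))\<^sup>2"
      by (simp add: algebra_simps)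
    also have "\<dots> = (norm (h - p))\<^sup>2 + t\<^sup>2 * (norm m')\<^sup>2 - 2 * t * a"
      by (simp add: norm_diff_sq_ip ip_scale_r a_def power_mult_distrib)
    also have "\<dots> = (norm (h - p))\<^sup>2 - a\<^sup>2 / (norm m')\<^sup>2"
      using nm by (simp add: t_def power2_eq_square field_simps)
    also have "\<dots> < (norm (h - p))\<^sup>2"
      using nm ne by (simp add: a_def)
    finally show False using pmin[OF q] by simp
  qed
  then show ?thesis using pM by blast
qed

end

lemma proj_H:
  fixes M :: "'a::chilbert_space set"
  assumes cl: "closed M" and z: "0 \<in> M"
    and add: "\<And>x y. x \<in> M \<Longrightarrow> y \<in> M \<Longrightarrow> x + y \<in> M"
    and sc: "\<And>c x. x \<in> M \<Longrightarrow> c *\<^sub>C x \<in> M"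
  shows "\<exists>p\<in>M. \<forall>m\<in>M. cinner (h - p) m = 0"
proof -
  interpret rip "\<lambda>x y::'a. Re (cinner x y)"
  proof
    fix x y z :: 'a and r :: real
    show "Re (cinner (x + y) z) = Re (cinner x z) + Re (cinner y z)" by (simp add: cinner_add_left)
    show "Re (cinner (r *\<^sub>R x) y) = r * Re (cinner x y)" by (simp add: cinner_scaleR_left)
    show "Re (cinner x y) = Re (cinner y x)" by (subst cinner_commute) simp
    show "Re (cinner x x) = (norm x)\<^sup>2" by (simp add: norm_sq_cinner)
  qed
  have scR: "r *\<^sub>R x \<in> M" if "x \<in> M" for r x using sc[OF that] by (simp add: scaleR_scaleC)
  obtain p where pM: "p \<in> M" and pr: "\<And>m. m \<in> M \<Longrightarrow> Re (cinner (h - p) m) = 0"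
    using projection_exists[OF cl z add scR] by blast
  have "cinner (h - p) m = 0" if mM: "m \<in> M" for m
  proof -
    have "Re (cinner (h - p) (\<i> *\<^sub>C m)) = 0" using pr sc mM by blast
    then have "Im (cinner (h - p) m) = 0" by (simp add: cinner_scaleC_right)
    with pr[OF mM] show ?thesis by (simp add: complex_eq_iff)
  qed
  with pM show ?thesis by blast
qed

definition pip :: "'a::complex_inner \<times> 'a \<Rightarrow> 'a \<times> 'a \<Rightarrow> real" where
  "pip x y = Re (cinner (fst x) (fst y) + cinner (snd x) (snd y))"

lemma proj_HH:
  fixes M :: "('a::chilbert_space \<times> 'a) set"
  assumes cl: "closed M" and z: "(0, 0) \<in> M"
    and add: "\<And>x y u v. (x, y) \<in> M \<Longrightarrow> (u, v) \<in> M \<Longrightarrow> (x + u, y + v) \<in> M"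
    and sc: "\<And>c x y. (x, y) \<in> M \<Longrightarrow> (c *\<^sub>C x, c *\<^sub>C y) \<in> M"
  shows "\<exists>p q. (p, q) \<in> M \<and> (\<forall>x y. (x, y) \<in> M \<longrightarrow> cinner (a - p) x + cinner (b - q) y = 0)"
proof -
  interpret rip "pip :: 'a \<times> 'a \<Rightarrow> _"
  proof
    fix x y z :: "'a \<times> 'a" and r :: real
    show "pip (x + y) z = pip x z + pip y z" by (simp add: pip_def cinner_add_left)
    show "pip (r *\<^sub>R x) y = r * pip x y" by (simp add: pip_def cinner_scaleR_left algebra_simps)
    have "Re (cinner (fst x) (fst y)) = Re (cinner (fst y) (fst x))" by (subst cinner_commute) simp
    moreover have "Re (cinner (snd x) (snd y)) = Re (cinner (snd y) (snd x))" by (subst cinner_commute) simp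
    ultimately show "pip x y = pip y x" by (simp add: pip_def)
    show "pip x x = (norm x)\<^sup>2"
      by (cases x) (simp add: pip_def norm_Pair norm_sq_cinner[symmetric])
  qed
  have M0: "0 \<in> M" using z by (simp add: zero_prod_def)
  have Madd: "x + y \<in> M" if "x \<in> M" "y \<in> M" for x y
    using add[of "fst x" "snd x" "fst y" "snd y"] that by (simp add: plus_prod_def)
  have MscR: "r *\<^sub>R x \<in> M" if "x \<in> M" for r x
    using sc[of "fst x" "snd x" "complex_of_real r"] that by (simp add: scaleR_scaleC scaleR_prod_def)
  obtain pq where pM: "pq \<in> M" and pr: "\<And>m. m \<in> M \<Longrightarrow> pip ((a, b) - pq) m = 0"
    using projection_exists[OF cl M0 Madd MscR, of "(a, b)"] by blast
  obtain p q where pq: "pq = (p, q)" by fastforce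
  have "cinner (a - p) x + cinner (b - q) y = 0" if mM: "(x, y) \<in> M" for x y
  proof -
    have r1: "Re (cinner (a - p) x + cinner (b - q) y) = 0" using pr[OF mM] by (simp add: pq pip_def)
    have "Re (cinner (a - p) (\<i> *\<^sub>C x) + cinner (b - q) (\<i> *\<^sub>C y)) = 0"
      using pr[OF sc[OF mM, of \<i>]] by (simp add: pq pip_def)
    then have "Im (cinner (a - p) x + cinner (b - q) y) = 0" by (simp add: cinner_scaleC_right)
    with r1 show ?thesis by (simp add: complex_eq_iff)
  qed
  with pM pq show ?thesis by blast
qed

lemma closure_csubspace:
  fixes M :: "'a::complex_normed_vector set"
  assumes "csubspace M"
  shows "csubspace (closure M)"
proof -
  have z: "0 \<in> M" and ad: "\<And>x y. x \<in> M \<Longrightarrow> y \<in> M \<Longrightarrow> x + y \<in> M"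
    and sc: "\<And>c x. x \<in> M \<Longrightarrow> c *\<^sub>C x \<in> M" using assms by (auto simp: csubspace_def)
  have "x + y \<in> closure M" if xy: "x \<in> closure M" "y \<in> closure M" for x y
  proof -
    obtain f where f: "\<And>n. f n \<in> M" "f \<longlonglongrightarrow> x" using xy(1) unfolding closure_sequential by blast
    obtain g where g: "\<And>n. g n \<in> M" "g \<longlonglongrightarrow> y" using xy(2) unfolding closure_sequential by blast
    have "(\<lambda>n. f n + g n) \<longlonglongrightarrow> x + y" by (intro tendsto_intros f g)
    moreover have "\<And>n. f n + g n \<in> M" using f g ad by blast
    ultimately show ?thesis unfolding closure_sequential by (intro exI[of _ "\<lambda>n. f n + g n"]) blast
  qed
  moreover have "c *\<^sub>C x \<in> closure M" if xy: "x \<in> closure M" for c x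
  proof -
    obtain f where f: "\<And>n. f n \<in> M" "f \<longlonglongrightarrow> x" using xy(1) unfolding closure_sequential by blast
    have "(\<lambda>n. c *\<^sub>C f n) \<longlonglongrightarrow> c *\<^sub>C x" by (intro tendsto_intros f)
    moreover have "\<And>n. c *\<^sub>C f n \<in> M" using f sc by blast
    ultimately show ?thesis unfolding closure_sequential by (intro exI[of _ "\<lambda>n. c *\<^sub>C f n"]) blast
  qed
  moreover have "0 \<in> closure M" using z closure_subset by blast
  ultimately show ?thesis by (auto simp: csubspace_def)
qed

lemma dense_if_orth:
  fixes M :: "'a::chilbert_space set"
  assumes "csubspace M" and orth: "\<And>h. (\<And>m. m \<in> M \<Longrightarrow> cinner m h = 0) \<Longrightarrow> h = 0"
  shows "closure M = UNIV"
proof -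
  have cs: "csubspace (closure M)" by (rule closure_csubspace[OF assms(1)])
  have "h \<in> closure M" for h
  proof -
    obtain p where pM: "p \<in> closure M" and pr: "\<And>m. m \<in> closure M \<Longrightarrow> cinner (h - p) m = 0"
      using proj_H[of "closure M" h] cs unfolding csubspace_def by blast
    have "h - p = 0"
    proof (rule orth)
      fix m assume "m \<in> M"
      then have "cinner (h - p) m = 0" using pr closure_subset by blast
      then show "cinner m (h - p) = 0" by (subst cinner_commute) simp
    qed
    then show ?thesis using pM by simp
  qed
  then show ?thesis by blast
qed


definition clinear :: "('a::complex_vector \<Rightarrow> 'a) \<Rightarrow> bool" where
  "clinear B \<longleftrightarrow> (\<forall>x y. B (x + y) = B x + B y) \<and> (\<forall>c x. B (c *\<^sub>C x) = c *\<^sub>C B x)"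

lemma clinear_add: "clinear B \<Longrightarrow> B (x + y) = B x + B y" by (simp add: clinear_def)
lemma clinear_scaleC: "clinear B \<Longrightarrow> B (c *\<^sub>C x) = c *\<^sub>C B x" by (simp add: clinear_def)
lemma clinear_scaleR: "clinear B \<Longrightarrow> B (r *\<^sub>R x) = r *\<^sub>R B x"
  by (simp add: clinear_def scaleR_scaleC)
lemma clinear_zero: "clinear B \<Longrightarrow> B 0 = 0"
  using clinear_scaleC[of B 0 0] by simp
lemma clinear_minus: "clinear B \<Longrightarrow> B (- x) = - B x"
  using clinear_scaleR[of B "-1" x] by simp
lemma clinear_diff: "clinear B \<Longrightarrow> B (x - y) = B x - B y"
  using clinear_add[of B x "- y"] clinear_minus[of B y] by simp
lemma clinear_sum: "clinear B \<Longrightarrow> B (\<Sum>i\<in>A. f i) = (\<Sum>i\<in>A. B (f i))"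
  by (induction A rule: infinite_finite_induct) (auto simp: clinear_zero clinear_add)
lemma clinear_comp: "clinear B \<Longrightarrow> clinear C \<Longrightarrow> clinear (\<lambda>x. B (C x))"
  by (simp add: clinear_def)
lemma clinear_id: "clinear (\<lambda>x. x)" by (simp add: clinear_def)
lemma clinear_funpow: "clinear B \<Longrightarrow> clinear (B ^^ k)"
  by (induction k) (auto simp: clinear_def)

definition sadj :: "('a::complex_inner \<Rightarrow> 'a) \<Rightarrow> bool" where
  "sadj B \<longleftrightarrow> (\<forall>x y. cinner (B x) y = cinner x (B y))"

lemma sadj_funpow: assumes "sadj B" shows "sadj (B ^^ k)"
proof (induction k)
  case 0 show ?case by (simp add: sadj_def)
next
  case (Suc k)
  show ?case unfolding sadj_def
  proof (intro allI)
    fix x y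
    have "cinner ((B ^^ Suc k) x) y = cinner (B ((B ^^ k) x)) y" by simp
    also have "\<dots> = cinner ((B ^^ k) x) (B y)" using assms by (simp add: sadj_def)
    also have "\<dots> = cinner x ((B ^^ k) (B y))" using Suc by (simp add: sadj_def)
    also have "\<dots> = cinner x ((B ^^ Suc k) y)" by (simp only: funpow_swap1 funpow.simps comp_def)
    finally show "cinner ((B ^^ Suc k) x) y = cinner x ((B ^^ Suc k) y)" .
  qed
qed

lemma norm_funpow_le: fixes B :: "'a::real_normed_vector \<Rightarrow> 'a" assumes "\<And>x. norm (B x) \<le> norm x" shows "norm ((B ^^ k) x) \<le> norm x"
proof (induction k)
  case 0 show ?case by simp
next
  case (Suc k) then show ?case using assms[of "(B ^^ k) x"] by simp
qed

lemma funpow_commute_op: "(\<And>x. C (B x) = B (C x)) \<Longrightarrow> C ((B ^^ k) x) = (B ^^ k) (C x)"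
  by (induction k) auto

definition nn :: "real poly \<Rightarrow> bool" where "nn p \<longleftrightarrow> (\<forall>k. 0 \<le> coeff p k)"

lemma nn_add: "nn p \<Longrightarrow> nn q \<Longrightarrow> nn (p + q)"
  by (simp add: nn_def)
lemma nn_mult: "nn p \<Longrightarrow> nn q \<Longrightarrow> nn (p * q)"
  by (simp add: nn_def coeff_mult sum_nonneg)
lemma nn_smult: "0 \<le> a \<Longrightarrow> nn p \<Longrightarrow> nn (smult a p)"
  by (simp add: nn_def)
lemma poly1_nonneg: "nn p \<Longrightarrow> 0 \<le> poly p 1"
  by (simp add: poly_altdef nn_def sum_nonneg)

locale qop =
  fixes Q :: "'a::chilbert_space \<Rightarrow> 'a"
  assumes Q_lin: "clinear Q"
    and Q_norm: "\<And>x. norm (Q x) \<le> norm x"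
    and Q_sadj: "sadj Q"
begin

definition pe :: "real poly \<Rightarrow> 'a \<Rightarrow> 'a" where
  "pe p x = (\<Sum>k<Suc (degree p). coeff p k *\<^sub>R (Q ^^ k) x)"

lemma pe_N: assumes "degree p < N" shows "pe p x = (\<Sum>k<N. coeff p k *\<^sub>R (Q ^^ k) x)"
proof -
  have "(\<Sum>k<N. coeff p k *\<^sub>R (Q ^^ k) x) = (\<Sum>k<Suc (degree p). coeff p k *\<^sub>R (Q ^^ k) x)"
  proof (rule sum.mono_neutral_right)
    show "finite {..<N}" by simp
    show "{..<Suc (degree p)} \<subseteq> {..<N}" using assms by auto
    show "\<forall>i\<in>{..<N} - {..<Suc (degree p)}. coeff p i *\<^sub>R (Q ^^ i) x = 0"
      by (auto simp: coeff_eq_0)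
  qed
  then show ?thesis by (simp add: pe_def)
qed

lemma pe_pCons: "pe (pCons a p) x = a *\<^sub>R x + Q (pe p x)"
proof -
  define N where "N = Suc (degree p)"
  have d1: "degree (pCons a p) < Suc N" using degree_pCons_le[of a p] by (simp add: N_def)
  have "pe (pCons a p) x = (\<Sum>k<Suc N. coeff (pCons a p) k *\<^sub>R (Q ^^ k) x)" by (rule pe_N[OF d1])
  also have "\<dots> = a *\<^sub>R x + (\<Sum>k<N. coeff p k *\<^sub>R (Q ^^ Suc k) x)"
    by (subst sum.lessThan_Suc_shift) simp
  also have "(\<Sum>k<N. coeff p k *\<^sub>R (Q ^^ Suc k) x) = Q (\<Sum>k<N. coeff p k *\<^sub>R (Q ^^ k) x)"
    by (simp add: clinear_sum[OF Q_lin] clinear_scaleR[OF Q_lin])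
  also have "(\<Sum>k<N. coeff p k *\<^sub>R (Q ^^ k) x) = pe p x" by (simp add: pe_def N_def)
  finally show ?thesis .
qed

lemma pe_0 [simp]: "pe 0 x = 0" by (simp add: pe_def)

lemma pe_add: "pe (p + q) x = pe p x + pe q x"
proof -
  define N where "N = Suc (max (degree p) (degree q))"
  have dp: "degree p < N" and dq: "degree q < N" by (auto simp: N_def)
  have dpq: "degree (p + q) < N" using degree_add_le[of p "max (degree p) (degree q)" q] by (auto simp: N_def)
  show ?thesis unfolding pe_N[OF dp] pe_N[OF dq] pe_N[OF dpq]
    by (simp add: scaleR_add_left sum.distrib)
qed

lemma pe_smult: "pe (smult a p) x = a *\<^sub>R pe p x"
proof -
  have d: "degree (smult a p) < Suc (degree p)" using degree_smult_le[of a p] by simp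
  show ?thesis unfolding pe_N[OF d] pe_def by (simp add: scaleR_sum_right del: sum.lessThan_Suc)
qed

lemma pe_minus: "pe (- p) x = - pe p x"
  using pe_smult[of "-1" p x] by simp

lemma pe_diff: "pe (p - q) x = pe p x - pe q x"
  using pe_add[of p "- q" x] pe_minus[of q x] by simp

lemma pe_lin: "clinear (pe p)"
proof -
  have l: "clinear (Q ^^ k)" for k by (rule clinear_funpow[OF Q_lin])
  have a: "pe p (x + y) = pe p x + pe p y" for x y
    unfolding pe_def by (simp add: clinear_add[OF l] scaleR_add_right sum.distrib del: sum.lessThan_Suc)
  have b: "pe p (c *\<^sub>C x) = c *\<^sub>C pe p x" for c x
    unfolding pe_def by (simp add: clinear_scaleC[OF l] scaleC_sum_right scaleR_scaleC mult.commute del: sum.lessThan_Suc)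
  show ?thesis unfolding clinear_def using a b by blast
qed

lemma pe_mult: "pe (p * q) x = pe p (pe q x)"
proof (induction p arbitrary: x)
  case 0 then show ?case by simp
next
  case (pCons a p)
  have "pe (pCons a p * q) x = a *\<^sub>R pe q x + Q (pe (p * q) x)"
    by (simp add: pe_add pe_smult pe_pCons)
  also have "\<dots> = pe (pCons a p) (pe q x)" by (simp add: pCons.IH pe_pCons)
  finally show ?case .
qed

lemma pe_X: "pe [:0, 1:] x = Q x"
  by (simp add: pe_pCons clinear_zero[OF Q_lin])

lemma pe_one: "pe 1 x = x"
  by (simp add: pe_pCons one_pCons clinear_zero[OF Q_lin])

lemma pe_sadj: "sadj (pe p)"
proof -
  have s: "sadj (Q ^^ k)" for k by (rule sadj_funpow[OF Q_sadj])
  show ?thesis unfolding sadj_def pe_def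
    using s by (simp add: cinner_sum_left cinner_sum_right cinner_scaleR_left cinner_scaleR_right sadj_def del: sum.lessThan_Suc)
qed

lemma pe_commute:
  assumes "clinear B" "\<And>x. B (Q x) = Q (B x)"
  shows "B (pe p x) = pe p (B x)"
  unfolding pe_def
  by (simp add: clinear_sum[OF assms(1)] clinear_scaleR[OF assms(1)] funpow_commute_op[where C=B and B=Q, OF assms(2)] del: sum.lessThan_Suc)

lemma pe_norm: assumes "nn p" shows "norm (pe p x) \<le> poly p 1 * norm x"
proof -
  have "norm (pe p x) \<le> (\<Sum>k<Suc (degree p). norm (coeff p k *\<^sub>R (Q ^^ k) x))"
    unfolding pe_def by (rule norm_sum)
  also have "\<dots> \<le> (\<Sum>k<Suc (degree p). coeff p k * norm x)"
  proof (rule sum_mono)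
    fix k
    have "norm ((Q ^^ k) x) \<le> norm x" by (rule norm_funpow_le[OF Q_norm])
    then show "norm (coeff p k *\<^sub>R (Q ^^ k) x) \<le> coeff p k * norm x"
      using assms by (simp add: nn_def mult_left_mono)
  qed
  also have "\<dots> = poly p 1 * norm x"
    by (simp add: poly_altdef sum_distrib_right lessThan_Suc_atMost)
  finally show ?thesis .
qed

end

primrec pp :: "nat \<Rightarrow> real poly" where
  "pp 0 = 0"
| "pp (Suc n) = smult (1/2) ([:0, 1:] + pp n * pp n)"

lemma nn_X: "nn [:0, 1:]"
  by (auto simp: nn_def coeff_pCons split: nat.split)

lemma nn_pp: "nn (pp n)"
proof (induction n)
  case 0 show ?case by (simp add: nn_def)
next
  case (Suc n) show ?case unfolding pp.simps by (intro nn_smult nn_add nn_mult nn_X Suc) simp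
qed

lemma nn_pp_step: "nn (pp (Suc n) - pp n)"
proof (induction n)
  case 0 then show ?case using nn_smult[OF _ nn_X, of "1/2"] by simp
next
  case (Suc n)
  have "pp (Suc (Suc n)) - pp (Suc n) = smult (1/2) ((pp (Suc n) - pp n) * (pp (Suc n) + pp n))"
    by (simp add: algebra_simps smult_add_right smult_diff_right)
  then show ?case
    by (simp only:) (intro nn_smult nn_mult nn_add Suc nn_pp, simp)
qed

lemma nn_pp_mono: "m \<le> n \<Longrightarrow> nn (pp n - pp m)"
proof (induction n rule: dec_induct)
  case base then show ?case by (simp add: nn_def)
next
  case (step n)
  have eq: "(pp (Suc n) - pp n) + (pp n - pp m) = pp (Suc n) - pp m"
    by (simp only: add_diff_eq diff_add_cancel)
  from nn_add[OF nn_pp_step[of n] step.IH] show ?case by (simp only: eq)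
qed

definition tt :: "nat \<Rightarrow> real" where "tt n = poly (pp n) 1"

lemma tt_Suc: "tt (Suc n) = (1 + (tt n)\<^sup>2) / 2"
  by (simp add: tt_def power2_eq_square)

lemma tt_bounds: "0 \<le> tt n \<and> tt n \<le> 1"
proof (induction n)
  case 0 then show ?case by (simp add: tt_def)
next
  case (Suc n)
  then have "(tt n)\<^sup>2 \<le> 1" by (simp add: power_le_one)
  moreover have "0 \<le> (tt n)\<^sup>2" by simp
  ultimately show ?case by (simp add: tt_Suc)
qed

lemma tt_mono: "m \<le> n \<Longrightarrow> tt m \<le> tt n"
  using poly1_nonneg[OF nn_pp_mono[of m n]] by (simp add: tt_def)

lemma tt_Cauchy: "Cauchy tt"
proof -
  have "incseq tt" by (simp add: incseq_def tt_mono)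
  then obtain L where "tt \<longlonglongrightarrow> L" using incseq_convergent[of tt 1] tt_bounds by blast
  then show ?thesis using convergent_Cauchy convergent_def by blast
qed

lemma bop_tendsto:
  assumes "clinear B" "\<And>x. norm (B x) \<le> K * norm x" "f \<longlonglongrightarrow> l"
  shows "(\<lambda>n. B (f n)) \<longlonglongrightarrow> B l"
proof -
  have "bounded_linear B"
  proof (rule bounded_linear_intro[where K=K])
    show "B (x + y) = B x + B y" for x y using assms(1) by (rule clinear_add)
    show "B (r *\<^sub>R x) = r *\<^sub>R B x" for r x using assms(1) by (rule clinear_scaleR)
    show "norm (B x) \<le> norm x * K" for x using assms(2)[of x] by (simp add: mult.commute)
  qed
  then show ?thesis using assms(3) by (rule bounded_linear.tendsto)
qed

context qop
begin

lemma Xn_norm: "norm (pe (pp n) x) \<le> norm x"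
proof -
  have "norm (pe (pp n) x) \<le> tt n * norm x" using pe_norm[OF nn_pp] by (simp add: tt_def)
  also have "\<dots> \<le> norm x" using tt_bounds[of n] by (simp add: mult_left_le_one_le)
  finally show ?thesis .
qed

lemma Xn_Cauchy: "Cauchy (\<lambda>n. pe (pp n) x)"
proof (rule metric_CauchyI)
  fix e :: real assume e: "0 < e"
  have "0 < e / (norm x + 1)" by (intro divide_pos_pos e add_nonneg_pos[OF norm_ge_zero zero_less_one])
  then obtain M where M: "\<And>m n. m \<ge> M \<Longrightarrow> n \<ge> M \<Longrightarrow> dist (tt m) (tt n) < e / (norm x + 1)"
    using metric_CauchyD[OF tt_Cauchy] by blast
  have key: "dist (pe (pp m) x) (pe (pp n) x) < e" if mn: "m \<le> n" "m \<ge> M" "n \<ge> M" for m n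
  proof -
    have "dist (pe (pp m) x) (pe (pp n) x) = norm (pe (pp n - pp m) x)"
      by (simp add: dist_norm pe_diff norm_minus_commute)
    also have "\<dots> \<le> poly (pp n - pp m) 1 * norm x" by (rule pe_norm[OF nn_pp_mono[OF mn(1)]])
    also have "poly (pp n - pp m) 1 = dist (tt m) (tt n)"
      using tt_mono[OF mn(1)] by (simp add: tt_def dist_real_def)
    also have "dist (tt m) (tt n) * norm x \<le> e / (norm x + 1) * norm x"
      by (intro mult_right_mono less_imp_le M[OF mn(2,3)] norm_ge_zero)
    also have "\<dots> < e"
    proof -
      have p: "0 < norm x + 1" by (simp add: add_nonneg_pos)
      have "norm x / (norm x + 1) < 1" using p by (simp add: divide_less_eq)
      then have "e * (norm x / (norm x + 1)) < e * 1" using e by (rule mult_strict_left_mono)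
      moreover have "e / (norm x + 1) * norm x = e * (norm x / (norm x + 1))" by simp
      ultimately show ?thesis by simp
    qed
    finally show ?thesis .
  qed
  show "\<exists>M. \<forall>m\<ge>M. \<forall>n\<ge>M. dist (pe (pp m) x) (pe (pp n) x) < e"
  proof (intro exI allI impI)
    fix m n assume "m \<ge> M" "n \<ge> M"
    then show "dist (pe (pp m) x) (pe (pp n) x) < e"
      using key[of m n] key[of n m] by (cases "m \<le> n") (auto simp: dist_commute)
  qed
qed

definition Xop :: "'a \<Rightarrow> 'a" where "Xop x = lim (\<lambda>n. pe (pp n) x)"

lemma Xn_lim: "(\<lambda>n. pe (pp n) x) \<longlonglongrightarrow> Xop x"
  unfolding Xop_def using Xn_Cauchy Cauchy_convergent_iff convergent_LIMSEQ_iff by blast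

lemma Xop_norm: "norm (Xop x) \<le> norm x"
  by (rule LIMSEQ_le_const2[OF tendsto_norm[OF Xn_lim]]) (simp add: Xn_norm)

lemma Xop_lin: "clinear Xop"
proof -
  have "Xop (x + y) = Xop x + Xop y" for x y
  proof (rule LIMSEQ_unique[OF Xn_lim])
    show "(\<lambda>n. pe (pp n) (x + y)) \<longlonglongrightarrow> Xop x + Xop y"
      using tendsto_add[OF Xn_lim[of x] Xn_lim[of y]] by (simp add: clinear_add[OF pe_lin])
  qed
  moreover have "Xop (c *\<^sub>C x) = c *\<^sub>C Xop x" for c x
  proof (rule LIMSEQ_unique[OF Xn_lim])
    show "(\<lambda>n. pe (pp n) (c *\<^sub>C x)) \<longlonglongrightarrow> c *\<^sub>C Xop x"
      using tendsto_scaleC[OF tendsto_const Xn_lim[of x], of c] by (simp add: clinear_scaleC[OF pe_lin])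
  qed
  ultimately show ?thesis by (simp add: clinear_def)
qed

lemma Xop_sadj: "sadj Xop"
  unfolding sadj_def
proof (intro allI)
  fix x y
  have "(\<lambda>n. cinner (pe (pp n) x) y) \<longlonglongrightarrow> cinner (Xop x) y" by (intro tendsto_intros Xn_lim)
  moreover have "(\<lambda>n. cinner (pe (pp n) x) y) \<longlonglongrightarrow> cinner x (Xop y)"
    using tendsto_cinner[OF tendsto_const Xn_lim[of y], of x] pe_sadj by (simp add: sadj_def)
  ultimately show "cinner (Xop x) y = cinner x (Xop y)" by (rule LIMSEQ_unique)
qed

lemma Xop_commute:
  assumes "clinear B" "\<And>x. norm (B x) \<le> K * norm x" "\<And>x. B (Q x) = Q (B x)"
  shows "B (Xop x) = Xop (B x)"
proof (rule LIMSEQ_unique)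
  show "(\<lambda>n. B (pe (pp n) x)) \<longlonglongrightarrow> B (Xop x)" by (rule bop_tendsto[OF assms(1,2) Xn_lim])
  show "(\<lambda>n. B (pe (pp n) x)) \<longlonglongrightarrow> Xop (B x)"
    using Xn_lim[of "B x"] by (simp add: pe_commute[OF assms(1,3)])
qed

lemma Xop_eq: "Xop x = (1/2) *\<^sub>R (Q x + Xop (Xop x))"
proof (rule LIMSEQ_unique)
  show "(\<lambda>n. pe (pp (Suc n)) x) \<longlonglongrightarrow> Xop x" by (rule LIMSEQ_Suc[OF Xn_lim])
  have e: "pe (pp (Suc n)) x = (1/2) *\<^sub>R (Q x + pe (pp n) (pe (pp n) x))" for n
    by (simp only: pp.simps pe_smult pe_add pe_X pe_mult)
  have "(\<lambda>n. pe (pp n) (pe (pp n) x) - Xop (Xop x)) \<longlonglongrightarrow> 0"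
  proof (rule Lim_null_comparison)
    show "\<forall>\<^sub>F n in sequentially. norm (pe (pp n) (pe (pp n) x) - Xop (Xop x))
        \<le> norm (pe (pp n) x - Xop x) + norm (pe (pp n) (Xop x) - Xop (Xop x))"
    proof (rule always_eventually, intro allI)
      fix n
      have eq: "pe (pp n) (pe (pp n) x) - Xop (Xop x)
          = pe (pp n) (pe (pp n) x - Xop x) + (pe (pp n) (Xop x) - Xop (Xop x))"
        by (simp add: clinear_diff[OF pe_lin] del: pp.simps)
      have "norm (pe (pp n) (pe (pp n) x) - Xop (Xop x))
          \<le> norm (pe (pp n) (pe (pp n) x - Xop x)) + norm (pe (pp n) (Xop x) - Xop (Xop x))"
        unfolding eq by (rule norm_triangle_ineq)
      also have "norm (pe (pp n) (pe (pp n) x - Xop x)) \<le> norm (pe (pp n) x - Xop x)" by (rule Xn_norm)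
      finally show "norm (pe (pp n) (pe (pp n) x) - Xop (Xop x))
        \<le> norm (pe (pp n) x - Xop x) + norm (pe (pp n) (Xop x) - Xop (Xop x))" by simp
    qed
    have a: "(\<lambda>n. norm (pe (pp n) x - Xop x)) \<longlonglongrightarrow> 0"
      using Xn_lim[of x] unfolding Lim_null[of _ "Xop x"] by (rule tendsto_norm_zero)
    have b: "(\<lambda>n. norm (pe (pp n) (Xop x) - Xop (Xop x))) \<longlonglongrightarrow> 0"
      using Xn_lim[of "Xop x"] unfolding Lim_null[of _ "Xop (Xop x)"] by (rule tendsto_norm_zero)
    show "(\<lambda>n. norm (pe (pp n) x - Xop x) + norm (pe (pp n) (Xop x) - Xop (Xop x))) \<longlonglongrightarrow> 0"
      using tendsto_add[OF a b] by simp
  qed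
  then have "(\<lambda>n. pe (pp n) (pe (pp n) x)) \<longlonglongrightarrow> Xop (Xop x)" unfolding Lim_null[of _ "Xop (Xop x)"] .
  then have "(\<lambda>n. (1/2) *\<^sub>R (Q x + pe (pp n) (pe (pp n) x))) \<longlonglongrightarrow> (1/2) *\<^sub>R (Q x + Xop (Xop x))"
    by (intro tendsto_intros)
  then show "(\<lambda>n. pe (pp (Suc n)) x) \<longlonglongrightarrow> (1/2) *\<^sub>R (Q x + Xop (Xop x))" by (simp only: e)
qed

end

lemma sadj_quad_diff:
  assumes l: "clinear B" and s: "sadj B"
  shows "Re (cinner (B (h + g)) (h + g)) - Re (cinner (B (h - g)) (h - g)) = 4 * Re (cinner (B h) g)"
proof -
  have r: "Re (cinner (B g) h) = Re (cinner (B h) g)"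
  proof -
    have "cinner (B g) h = cinner g (B h)" using s by (simp add: sadj_def)
    also have "\<dots> = cnj (cinner (B h) g)" by (rule cinner_commute)
    finally show ?thesis by simp
  qed
  have "Re (cinner (B (h + g)) (h + g)) - Re (cinner (B (h - g)) (h - g))
      = 2 * Re (cinner (B h) g) + 2 * Re (cinner (B g) h)"
    by (simp add: clinear_add[OF l] clinear_diff[OF l] cinner_add_left cinner_add_right
        cinner_diff_left cinner_diff_right)
  then show ?thesis using r by simp
qed

lemma sadj_norm_le:
  assumes l: "clinear B" and s: "sadj B" and q: "\<And>x. \<bar>Re (cinner (B x) x)\<bar> \<le> (norm x)\<^sup>2"
  shows "norm (B h) \<le> norm h"
proof (cases "B h = 0")
  case True then show ?thesis by simp
next
  case False
  have hne: "h \<noteq> 0" using False clinear_zero[OF l] by auto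
  define r where "r = norm h / norm (B h)"
  define g where "g = r *\<^sub>R B h"
  have rpos: "r > 0" using False hne by (simp add: r_def)
  have ng: "norm g = norm h" using False by (simp add: g_def r_def)
  have "Re (cinner (B h) g) = r * (norm (B h))\<^sup>2"
    by (simp add: g_def cinner_scaleR_right norm_sq_cinner)
  also have "\<dots> = norm h * norm (B h)" using False by (simp add: r_def power2_eq_square)
  finally have e1: "Re (cinner (B h) g) = norm h * norm (B h)" .
  have "4 * Re (cinner (B h) g) \<le> (norm (h + g))\<^sup>2 + (norm (h - g))\<^sup>2"
    using sadj_quad_diff[OF l s, of h g] q[of "h + g"] q[of "h - g"] by linarith
  also have "\<dots> = 4 * (norm h)\<^sup>2" by (simp add: norm_add_sq norm_diff_sq ng)
  finally have "norm h * norm (B h) \<le> norm h * norm h" using e1 by (simp add: power2_eq_square)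
  then show ?thesis using hne by simp
qed

theorem op_sqrt:
  fixes P :: "'a::chilbert_space \<Rightarrow> 'a"
  assumes Pl: "clinear P" and Ps: "sadj P" and Pp: "\<And>x. 0 \<le> Re (cinner (P x) x)"
    and Pn: "\<And>x. norm (P x) \<le> 2 * norm x"
  shows "\<exists>Y. clinear Y \<and> sadj Y \<and> (\<forall>x. norm (Y x) \<le> 2 * norm x) \<and> (\<forall>x. 0 \<le> Re (cinner (Y x) x))
    \<and> (\<forall>x. Y (Y x) = P x)
    \<and> (\<forall>B K. clinear B \<longrightarrow> (\<forall>x. norm (B x) \<le> K * norm x) \<longrightarrow> (\<forall>x. B (P x) = P (B x))
          \<longrightarrow> (\<forall>x. B (Y x) = Y (B x)))"
proof -
  define Q where "Q = (\<lambda>x. x - P x)"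
  have Ql: "clinear Q" using Pl by (simp add: Q_def clinear_def scaleC_diff_right)
  have Qs: "sadj Q" using Ps by (simp add: Q_def sadj_def cinner_diff_left cinner_diff_right)
  have Qq: "\<bar>Re (cinner (Q x) x)\<bar> \<le> (norm x)\<^sup>2" for x
  proof -
    have "Re (cinner (P x) x) \<le> cmod (cinner (P x) x)" by (rule complex_Re_le_cmod)
    also have "\<dots> \<le> norm (P x) * norm x" by (rule Cauchy_Schwarz)
    also have "\<dots> \<le> 2 * norm x * norm x" using Pn[of x] by (simp add: mult_right_mono)
    finally have "Re (cinner (P x) x) \<le> 2 * (norm x)\<^sup>2" by (simp add: power2_eq_square)
    moreover have "Re (cinner (Q x) x) = (norm x)\<^sup>2 - Re (cinner (P x) x)"
      by (simp add: Q_def cinner_diff_left norm_sq_cinner)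
    ultimately show ?thesis using Pp[of x] by linarith
  qed
  have Qn: "norm (Q x) \<le> norm x" for x by (rule sadj_norm_le[OF Ql Qs Qq])
  interpret qop Q using Ql Qn Qs by unfold_locales
  define Y where "Y = (\<lambda>x. x - Xop x)"
  have Yl: "clinear Y" using Xop_lin by (simp add: Y_def clinear_def scaleC_diff_right)
  have Ys: "sadj Y" using Xop_sadj by (simp add: Y_def sadj_def cinner_diff_left cinner_diff_right)
  have Yn: "norm (Y x) \<le> 2 * norm x" for x
    using norm_triangle_ineq4[of x "Xop x"] Xop_norm[of x] by (simp add: Y_def)
  have Yp: "0 \<le> Re (cinner (Y x) x)" for x
  proof -
    have "Re (cinner (Xop x) x) \<le> cmod (cinner (Xop x) x)" by (rule complex_Re_le_cmod)
    also have "\<dots> \<le> norm (Xop x) * norm x" by (rule Cauchy_Schwarz)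
    also have "\<dots> \<le> norm x * norm x" using Xop_norm[of x] by (simp add: mult_right_mono)
    finally have "Re (cinner (Xop x) x) \<le> (norm x)\<^sup>2" by (simp add: power2_eq_square)
    moreover have "Re (cinner (Y x) x) = (norm x)\<^sup>2 - Re (cinner (Xop x) x)"
      by (simp add: Y_def cinner_diff_left norm_sq_cinner)
    ultimately show ?thesis by linarith
  qed
  have YY: "Y (Y x) = P x" for x
  proof -
    have "Y (Y x) = x - Xop x - (Xop x - Xop (Xop x))" by (simp add: Y_def clinear_diff[OF Xop_lin])
    also have "Xop (Xop x) = 2 *\<^sub>R Xop x - Q x"
    proof -
      have "2 *\<^sub>R Xop x = 2 *\<^sub>R ((1/2) *\<^sub>R (Q x + Xop (Xop x)))"
        using Xop_eq[of x] by (rule arg_cong)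
      also have "\<dots> = Q x + Xop (Xop x)" by simp
      finally have "2 *\<^sub>R Xop x = Q x + Xop (Xop x)" .
      then show ?thesis by (simp add: algebra_simps)
    qed
    finally show ?thesis by (simp add: Q_def algebra_simps scaleR_2)
  qed
  have Yc: "B (Y x) = Y (B x)" if "clinear B" "\<And>x. norm (B x) \<le> K * norm x" "\<And>x. B (P x) = P (B x)" for B K x
  proof -
    have "B (Q x) = Q (B x)" for x using that(3)[of x] by (simp add: Q_def clinear_diff[OF that(1)])
    then have "B (Xop x) = Xop (B x)" by (rule Xop_commute[OF that(1,2)])
    then show ?thesis by (simp add: Y_def clinear_diff[OF that(1)])
  qed
  show ?thesis
    by (rule exI[of _ Y]) (use Yl Ys Yn Yp YY Yc in blast)
qed


section \<open>Graph operators\<close>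

lemma op_add: "is_operator T \<Longrightarrow> (x, y) \<in> T \<Longrightarrow> (u, v) \<in> T \<Longrightarrow> (x + u, y + v) \<in> T"
  by (simp add: is_operator_def)
lemma op_scale: "is_operator T \<Longrightarrow> (x, y) \<in> T \<Longrightarrow> (c *\<^sub>C x, c *\<^sub>C y) \<in> T"
  by (simp add: is_operator_def)
lemma op_zero: "is_operator T \<Longrightarrow> (0, 0) \<in> T"
  by (simp add: is_operator_def)
lemma op_zero_val: "is_operator T \<Longrightarrow> (0, y) \<in> T \<Longrightarrow> y = 0"
  by (simp add: is_operator_def)
lemma op_minus: "is_operator T \<Longrightarrow> (x, y) \<in> T \<Longrightarrow> (- x, - y) \<in> T"
  using op_scale[of T x y "-1"] by (simp add: scaleC_minus_left)
lemma op_diff: "is_operator T \<Longrightarrow> (x, y) \<in> T \<Longrightarrow> (u, v) \<in> T \<Longrightarrow> (x - u, y - v) \<in> T"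
  using op_add[of T x y "- u" "- v"] op_minus[of T u v] by simp
lemma op_single: "is_operator T \<Longrightarrow> (x, y) \<in> T \<Longrightarrow> (x, z) \<in> T \<Longrightarrow> y = z"
  using op_diff[of T x y x z] op_zero_val[of T "y - z"] by simp

lemma dense_orth_zero:
  fixes z :: "'a::complex_inner"
  assumes "dense_set S" "\<And>x. x \<in> S \<Longrightarrow> cinner x z = 0"
  shows "z = 0"
proof -
  have "z \<in> closure S" using assms(1) by (simp add: dense_set_def)
  then obtain f where f: "\<And>n. f n \<in> S" "f \<longlonglongrightarrow> z" unfolding closure_sequential by blast
  have "(\<lambda>n. cinner (f n) z) \<longlonglongrightarrow> cinner z z" by (intro tendsto_intros f)
  moreover have "(\<lambda>n. cinner (f n) z) = (\<lambda>n. 0)" using f assms(2) by auto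
  ultimately have "cinner z z = 0" using LIMSEQ_unique tendsto_const by metis
  then show ?thesis using cinner_eq_zero_iff by blast
qed

lemma adjoint_is_operator:
  fixes T :: "'a::complex_inner lop"
  assumes "densely_defined T"
  shows "is_operator (adjoint T)"
proof -
  have z: "(0, 0) \<in> adjoint T" by (simp add: adjoint_def)
  have a: "(y + y', z + z') \<in> adjoint T" if "(y, z) \<in> adjoint T" "(y', z') \<in> adjoint T" for y z y' z'
    using that by (simp add: adjoint_def cinner_add_right)
  have s: "(c *\<^sub>C y, c *\<^sub>C z) \<in> adjoint T" if "(y, z) \<in> adjoint T" for c y z
    using that by (simp add: adjoint_def cinner_scaleC_right)
  have v: "z = 0" if "(0, z) \<in> adjoint T" for z
  proof (rule dense_orth_zero[OF assms[unfolded densely_defined_def]])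
    fix x assume "x \<in> op_dom T"
    then obtain w where xw: "(x, w) \<in> T" by (auto simp: op_dom_def)
    then show "cinner x z = 0" using that xw unfolding adjoint_def by auto
  qed
  show ?thesis unfolding is_operator_def using z a s v by blast
qed

lemma adjoint_closed:
  fixes T :: "'a::complex_inner lop"
  shows "closed (adjoint T)"
proof -
  have "adjoint T = (\<Inter>p\<in>T. {q. cinner (snd p) (fst q) = cinner (fst p) (snd q)})"
    unfolding adjoint_def by (auto; metis fst_conv snd_conv)
  moreover have "closed {q. cinner (snd p) (fst q) = cinner (fst p) (snd q)}" for p :: "'a \<times> 'a"
    by (intro closed_Collect_eq continuous_on_cinner continuous_on_const continuous_on_fst continuous_on_snd continuous_on_id)
  ultimately show ?thesis by auto
qed

lemma adjoint_iff: "(y, z) \<in> adjoint T \<longleftrightarrow> (\<forall>x w. (x, w) \<in> T \<longrightarrow> cinner w y = cinner x z)"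
  by (simp add: adjoint_def)

lemma op_dom_iff: "x \<in> op_dom T \<longleftrightarrow> (\<exists>y. (x, y) \<in> T)"
  by (force simp: op_dom_def)

lemma op_range_iff: "y \<in> op_range T \<longleftrightarrow> (\<exists>x. (x, y) \<in> T)"
  by (force simp: op_range_def)

section \<open>The resolvent-type operator R = (1 + A* A)^-1\<close>

locale cdop =
  fixes A :: "'a::chilbert_space lop"
  assumes A_closed: "closed_operator A" and A_dense: "densely_defined A"
begin

lemma A_op: "is_operator A" using A_closed by (simp add: closed_operator_def)
lemma A_cl: "closed A" using A_closed by (simp add: closed_operator_def)
lemma adjA_op: "is_operator (adjoint A)" by (rule adjoint_is_operator[OF A_dense])

lemma R_exists: "\<exists>p q. (p, q) \<in> A \<and> (q, h - p) \<in> adjoint A"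
proof -
  obtain p q where pq: "(p, q) \<in> A"
    and orth: "\<And>x y. (x, y) \<in> A \<Longrightarrow> cinner (h - p) x + cinner (0 - q) y = 0"
    using proj_HH[OF A_cl op_zero[OF A_op] op_add[OF A_op] op_scale[OF A_op], of h 0] by blast
  have "(q, h - p) \<in> adjoint A"
    unfolding adjoint_iff
  proof (intro allI impI)
    fix x w assume xw: "(x, w) \<in> A"
    have "cinner (h - p) x = cinner q w" using orth[OF xw] by (simp add: cinner_minus_left)
    then have "cnj (cinner (h - p) x) = cnj (cinner q w)" by simp
    then show "cinner w q = cinner x (h - p)" by (metis cinner_commute)
  qed
  with pq show ?thesis by blast
qed

lemma R_unique:
  assumes "(p, q) \<in> A" "(q, h - p) \<in> adjoint A" "(p', q') \<in> A" "(q', h - p') \<in> adjoint A"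
  shows "p = p' \<and> q = q'"
proof -
  have d1: "(p - p', q - q') \<in> A" using op_diff[OF A_op assms(1,3)] .
  have d2: "(q - q', - (p - p')) \<in> adjoint A" using op_diff[OF adjA_op assms(2,4)] by simp
  have "cinner (q - q') (q - q') = cinner (p - p') (- (p - p'))"
    using d2 d1 unfolding adjoint_iff by blast
  then have "cinner (q - q') (q - q') = - cinner (p - p') (p - p')"
    by (simp only: cinner_minus_right)
  then have "cinner (q - q') (q - q') + cinner (p - p') (p - p') = 0"
    by simp
  then have "Re (cinner (q - q') (q - q') + cinner (p - p') (p - p')) = 0" by simp
  then have "(norm (q - q'))\<^sup>2 + (norm (p - p'))\<^sup>2 = 0"
    by (simp add: norm_sq_cinner)
  then have "norm (q - q') = 0 \<and> norm (p - p') = 0"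
    by (simp add: add_nonneg_eq_0_iff)
  then show ?thesis by simp
qed

definition R :: "'a \<Rightarrow> 'a" where
  "R h = (SOME p. \<exists>q. (p, q) \<in> A \<and> (q, h - p) \<in> adjoint A)"

definition qA :: "'a \<Rightarrow> 'a" where
  "qA h = (SOME q. (R h, q) \<in> A \<and> (q, h - R h) \<in> adjoint A)"

lemma R_prop: "(R h, qA h) \<in> A \<and> (qA h, h - R h) \<in> adjoint A"
proof -
  have "\<exists>q. (R h, q) \<in> A \<and> (q, h - R h) \<in> adjoint A"
    unfolding R_def using R_exists[of h] by (rule someI_ex)
  then show ?thesis unfolding qA_def by (rule someI_ex)
qed

lemma RA: "(R h, qA h) \<in> A" using R_prop by blast
lemma RadjA: "(qA h, h - R h) \<in> adjoint A" using R_prop by blast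

lemma R_char:
  assumes "(p, q) \<in> A" "(q, h - p) \<in> adjoint A"
  shows "R h = p \<and> qA h = q"
  using R_unique[OF RA RadjA assms] by blast

lemma R_ident: "(x, w) \<in> A \<Longrightarrow> cinner w (qA h) = cinner x (h - R h)"
  using RadjA[of h] unfolding adjoint_iff by blast

lemma R_lin: "clinear R" and qA_lin: "clinear qA"
proof -
  have a: "R (h + g) = R h + R g \<and> qA (h + g) = qA h + qA g" for h g
  proof (rule R_char)
    show "(R h + R g, qA h + qA g) \<in> A" by (rule op_add[OF A_op RA RA])
    show "(qA h + qA g, h + g - (R h + R g)) \<in> adjoint A"
      using op_add[OF adjA_op RadjA[of h] RadjA[of g]] by (simp add: algebra_simps)
  qed
  have b: "R (c *\<^sub>C h) = c *\<^sub>C R h \<and> qA (c *\<^sub>C h) = c *\<^sub>C qA h" for c h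
  proof (rule R_char)
    show "(c *\<^sub>C R h, c *\<^sub>C qA h) \<in> A" by (rule op_scale[OF A_op RA])
    show "(c *\<^sub>C qA h, c *\<^sub>C h - c *\<^sub>C R h) \<in> adjoint A"
      using op_scale[OF adjA_op RadjA[of h], of c] by (simp add: scaleC_diff_right)
  qed
  show "clinear R" using a b by (simp add: clinear_def)
  show "clinear qA" using a b by (simp add: clinear_def)
qed

lemma R_inner: "cinner (R h) g = cinner (R h) (R g) + cinner (qA h) (qA g)"
proof -
  have "cinner (qA h) (qA g) = cinner (R h) (g - R g)" by (rule R_ident[OF RA])
  then show ?thesis by (simp add: cinner_diff_right)
qed

lemma R_sadj: "sadj R"
  unfolding sadj_def
proof (intro allI)
  fix h g
  have "cinner h (R g) = cnj (cinner (R g) h)" by (rule cinner_commute)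
  also have "\<dots> = cnj (cinner (R g) (R h) + cinner (qA g) (qA h))" by (simp only: R_inner[of g h])
  also have "\<dots> = cinner (R h) (R g) + cinner (qA h) (qA g)"
    by (metis cinner_commute complex_cnj_add)
  finally show "cinner (R h) g = cinner h (R g)" by (simp only: R_inner[of h g])
qed

lemma R_quad: "cinner (R h) h = complex_of_real ((norm (R h))\<^sup>2 + (norm (qA h))\<^sup>2)"
  by (simp only: R_inner[of h h] cinner_self_norm of_real_add)

lemma R_norm: "norm (R h) \<le> norm h"
proof -
  have "(norm (R h))\<^sup>2 \<le> (norm (R h))\<^sup>2 + (norm (qA h))\<^sup>2" by simp
  also have "\<dots> = cmod (cinner (R h) h)"
    by (simp only: R_quad norm_of_real abs_of_nonneg[OF add_nonneg_nonneg[OF zero_le_power2 zero_le_power2]])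
  also have "\<dots> \<le> norm (R h) * norm h" by (rule Cauchy_Schwarz)
  finally have "norm (R h) * norm (R h) \<le> norm (R h) * norm h" by (simp add: power2_eq_square)
  then show ?thesis by (cases "norm (R h) = 0") auto
qed

lemma R_pos: "0 \<le> Re (cinner (R h) h)"
  by (simp add: R_quad)

lemma R_inj: "R h = 0 \<Longrightarrow> h = 0"
proof -
  assume "R h = 0"
  then have "qA h = 0" using RA[of h] op_zero_val[OF A_op] by simp
  then have "(0, h) \<in> adjoint A" using RadjA[of h] \<open>R h = 0\<close> by simp
  then show "h = 0" using op_zero_val[OF adjA_op] by blast
qed

lemma qA_norm: "complex_of_real ((norm (qA h))\<^sup>2) = cinner (R h) h - cinner (R (R h)) h"
proof -
  have "cinner (R (R h)) h = cinner (R h) (R h)" using R_sadj by (simp add: sadj_def)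
  then show ?thesis by (simp add: R_quad cinner_self_norm)
qed

end


definition sqrt_of :: "('a::complex_inner \<Rightarrow> 'a) \<Rightarrow> ('a \<Rightarrow> 'a) \<Rightarrow> bool" where
  "sqrt_of P Y \<longleftrightarrow> clinear Y \<and> sadj Y \<and> (\<forall>x. norm (Y x) \<le> 2 * norm x) \<and> (\<forall>x. 0 \<le> Re (cinner (Y x) x))
    \<and> (\<forall>x. Y (Y x) = P x)
    \<and> (\<forall>B K. clinear B \<longrightarrow> (\<forall>x. norm (B x) \<le> K * norm x) \<longrightarrow> (\<forall>x. B (P x) = P (B x))
          \<longrightarrow> (\<forall>x. B (Y x) = Y (B x)))"

lemma sqrt_ofI:
  fixes P :: "'a::chilbert_space \<Rightarrow> 'a"
  assumes "clinear P" "sadj P" "\<And>x. 0 \<le> Re (cinner (P x) x)" "\<And>x. norm (P x) \<le> 2 * norm x"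
  shows "sqrt_of P (SOME Y. sqrt_of P Y)"
  using op_sqrt[OF assms] unfolding sqrt_of_def[symmetric] by (rule someI_ex)

lemma sadj_Im_zero: "sadj B \<Longrightarrow> Im (cinner (B x) x) = 0"
proof -
  assume "sadj B"
  then have "cinner (B x) x = cinner x (B x)" by (simp add: sadj_def)
  also have "\<dots> = cnj (cinner (B x) x)" by (rule cinner_commute)
  finally have "Im (cinner (B x) x) = Im (cnj (cinner (B x) x))" by simp
  then show ?thesis by simp
qed

lemma closure_pair_subspace:
  fixes M :: "('a::complex_normed_vector \<times> 'a) set"
  assumes add: "\<And>x y u v. (x, y) \<in> M \<Longrightarrow> (u, v) \<in> M \<Longrightarrow> (x + u, y + v) \<in> M"
    and sc: "\<And>c x y. (x, y) \<in> M \<Longrightarrow> (c *\<^sub>C x, c *\<^sub>C y) \<in> M"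
  shows "\<And>x y u v. (x, y) \<in> closure M \<Longrightarrow> (u, v) \<in> closure M \<Longrightarrow> (x + u, y + v) \<in> closure M"
    and "\<And>c x y. (x, y) \<in> closure M \<Longrightarrow> (c *\<^sub>C x, c *\<^sub>C y) \<in> closure M"
proof -
  fix x y u v assume a: "(x, y) \<in> closure M" "(u, v) \<in> closure M"
  obtain f where f: "\<And>n. f n \<in> M" "f \<longlonglongrightarrow> (x, y)" using a(1) unfolding closure_sequential by blast
  obtain g where g: "\<And>n. g n \<in> M" "g \<longlonglongrightarrow> (u, v)" using a(2) unfolding closure_sequential by blast
  have "(\<lambda>n. f n + g n) \<longlonglongrightarrow> (x, y) + (u, v)" by (intro tendsto_intros f g)
  moreover have "f n + g n \<in> M" for n
    using add[of "fst (f n)" "snd (f n)" "fst (g n)" "snd (g n)"] f(1)[of n] g(1)[of n]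
    by (simp add: plus_prod_def)
  ultimately show "(x + u, y + v) \<in> closure M" unfolding closure_sequential
    by (intro exI[of _ "\<lambda>n. f n + g n"]) simp
next
  fix c x y assume a: "(x, y) \<in> closure M"
  obtain f where f: "\<And>n. f n \<in> M" "f \<longlonglongrightarrow> (x, y)" using a(1) unfolding closure_sequential by blast
  have f1: "(\<lambda>n. fst (f n)) \<longlonglongrightarrow> x" and f2: "(\<lambda>n. snd (f n)) \<longlonglongrightarrow> y"
    using tendsto_fst[OF f(2)] tendsto_snd[OF f(2)] by simp_all
  have "(\<lambda>n. (c *\<^sub>C fst (f n), c *\<^sub>C snd (f n))) \<longlonglongrightarrow> (c *\<^sub>C x, c *\<^sub>C y)"
    by (intro tendsto_Pair tendsto_scaleC tendsto_const f1 f2)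
  moreover have "(c *\<^sub>C fst (f n), c *\<^sub>C snd (f n)) \<in> M" for n
    using sc[of "fst (f n)" "snd (f n)" c] f(1)[of n] by simp
  ultimately show "(c *\<^sub>C x, c *\<^sub>C y) \<in> closure M" unfolding closure_sequential
    by (intro exI[of _ "\<lambda>n. (c *\<^sub>C fst (f n), c *\<^sub>C snd (f n))"]) simp
qed

lemma Cauchy_transfer:
  assumes "convergent g" "\<And>m n. dist (f m) (f n) = dist (g m) (g n :: 'b::metric_space)"
  shows "Cauchy (f :: nat \<Rightarrow> 'c::metric_space)"
proof (rule metric_CauchyI)
  fix e :: real assume "0 < e"
  then obtain M where "\<And>m n. m \<ge> M \<Longrightarrow> n \<ge> M \<Longrightarrow> dist (g m) (g n) < e"
    using metric_CauchyD[OF convergent_Cauchy[OF assms(1)]] by blast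
  then show "\<exists>M. \<forall>m\<ge>M. \<forall>n\<ge>M. dist (f m) (f n) < e" using assms(2) by metis
qed

context cdop
begin

definition Wop where "Wop = (SOME Y. sqrt_of (\<lambda>h. h - R h) Y)"
definition Vop where "Vop = (SOME Y. sqrt_of R Y)"

lemma W_sq: "sqrt_of (\<lambda>h. h - R h) Wop"
  unfolding Wop_def
proof (rule sqrt_ofI)
  show "clinear (\<lambda>h. h - R h)" using R_lin by (simp add: clinear_def scaleC_diff_right)
  show "sadj (\<lambda>h. h - R h)" using R_sadj by (simp add: sadj_def cinner_diff_left cinner_diff_right)
  show "0 \<le> Re (cinner (x - R x) x)" for x
  proof -
    have "Re (cinner (R x) x) \<le> cmod (cinner (R x) x)" by (rule complex_Re_le_cmod)
    also have "\<dots> \<le> norm (R x) * norm x" by (rule Cauchy_Schwarz)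
    also have "\<dots> \<le> norm x * norm x" using R_norm[of x] by (simp add: mult_right_mono)
    finally show ?thesis by (simp add: cinner_diff_left norm_sq_cinner[symmetric] power2_eq_square)
  qed
  show "norm (x - R x) \<le> 2 * norm x" for x
    using norm_triangle_ineq4[of x "R x"] R_norm[of x] by simp
qed

lemma V_sq: "sqrt_of R Vop"
  unfolding Vop_def
proof (rule sqrt_ofI)
  show "clinear R" by (rule R_lin)
  show "sadj R" by (rule R_sadj)
  show "0 \<le> Re (cinner (R x) x)" for x by (rule R_pos)
  show "norm (R x) \<le> 2 * norm x" for x using R_norm[of x] norm_ge_zero[of x] by linarith
qed

lemma W_lin: "clinear Wop" and W_sadj: "sadj Wop" and W_norm: "norm (Wop x) \<le> 2 * norm x"
  and W_pos: "0 \<le> Re (cinner (Wop x) x)" and WW: "Wop (Wop x) = x - R x"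
  using W_sq by (auto simp: sqrt_of_def)

lemma V_lin: "clinear Vop" and V_sadj: "sadj Vop" and V_norm: "norm (Vop x) \<le> 2 * norm x"
  and V_pos: "0 \<le> Re (cinner (Vop x) x)" and VV: "Vop (Vop x) = R x"
  using V_sq by (auto simp: sqrt_of_def)

lemma R_norm': "norm (R x) \<le> 1 * norm x" using R_norm by simp

lemma WR: "R (Wop x) = Wop (R x)"
proof -
  have "R (h - R h) = R h - R (R h)" for h by (simp add: clinear_diff[OF R_lin])
  then show ?thesis using W_sq R_lin R_norm' unfolding sqrt_of_def by blast
qed

lemma VR: "R (Vop x) = Vop (R x)"
  using V_sq R_lin R_norm' unfolding sqrt_of_def by blast

lemma VW: "Wop (Vop x) = Vop (Wop x)"
proof -
  have "Wop (R h) = R (Wop h)" for h using WR by simp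
  then show ?thesis using V_sq W_lin W_norm unfolding sqrt_of_def by blast
qed

definition V2 where "V2 = (SOME Y. sqrt_of Vop Y)"

lemma V2_sq: "sqrt_of Vop V2"
  unfolding V2_def by (rule sqrt_ofI[OF V_lin V_sadj V_pos V_norm])

lemma V2W: "Wop (V2 x) = V2 (Wop x)"
proof -
  have "Wop (Vop h) = Vop (Wop h)" for h using VW by simp
  then show ?thesis using V2_sq W_lin W_norm unfolding sqrt_of_def by blast
qed

lemma V_inj: "Vop x = 0 \<Longrightarrow> x = 0"
  using VV[of x] clinear_zero[OF V_lin] R_inj by metis

definition S :: "'a lop" where "S = (\<lambda>u. (Vop u, Wop u)) ` UNIV"

lemma S_iff: "(x, z) \<in> S \<longleftrightarrow> (\<exists>u. x = Vop u \<and> z = Wop u)"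
  by (auto simp: S_def)

lemma S_op: "is_operator S"
  unfolding is_operator_def S_iff
proof (intro conjI allI impI)
  show "\<exists>u. 0 = Vop u \<and> 0 = Wop u" using clinear_zero[OF V_lin] clinear_zero[OF W_lin] by metis
  show "\<exists>ua. x + u = Vop ua \<and> y + v = Wop ua" if "\<exists>u. x = Vop u \<and> y = Wop u" "\<exists>ua. u = Vop ua \<and> v = Wop ua" for x y u v
    using that clinear_add[OF V_lin] clinear_add[OF W_lin] by metis
  show "\<exists>u. c *\<^sub>C x = Vop u \<and> c *\<^sub>C y = Wop u" if "\<exists>u. x = Vop u \<and> y = Wop u" for c x y
    using that clinear_scaleC[OF V_lin] clinear_scaleC[OF W_lin] by metis
  show "y = 0" if "\<exists>u. 0 = Vop u \<and> y = Wop u" for y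
    using that V_inj clinear_zero[OF W_lin] by metis
qed

lemma S_dom: "op_dom S = range Vop"
  by (auto simp: op_dom_iff S_iff)

lemma rangeV_dense: "closure (range Vop) = UNIV"
proof (rule dense_if_orth)
  have a: "Vop a + Vop b \<in> range Vop" for a b
    using clinear_add[OF V_lin, of a b] by (metis rangeI)
  have b: "c *\<^sub>C Vop a \<in> range Vop" for c a
    using clinear_scaleC[OF V_lin, of c a] by (metis rangeI)
  have z: "0 \<in> range Vop" using clinear_zero[OF V_lin] by (metis rangeI)
  show "csubspace (range Vop)"
    unfolding csubspace_def using a b z by blast
  fix h assume o: "\<And>m. m \<in> range Vop \<Longrightarrow> cinner m h = 0"
  have "cinner (Vop h) h = 0" using o by blast
  have "cinner u (Vop h) = 0" for u using o[of "Vop u"] V_sadj by (simp add: sadj_def)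
  then have "Vop h = 0" using cinner_eq_zero_iff by blast
  then show "h = 0" by (rule V_inj)
qed

lemma S_adj: "adjoint S = S"
proof
  show "S \<subseteq> adjoint S"
  proof
    fix p assume "p \<in> S"
    then obtain u' where p: "p = (Vop u', Wop u')" by (auto simp: S_def)
    have "cinner w (Vop u') = cinner x (Wop u')" if xw: "(x, w) \<in> S" for x w
    proof -
      obtain u where u: "x = Vop u" "w = Wop u" using xw by (auto simp: S_iff)
      have "cinner (Wop u) (Vop u') = cinner u (Wop (Vop u'))" using W_sadj by (simp add: sadj_def)
      also have "\<dots> = cinner u (Vop (Wop u'))" by (simp add: VW)
      also have "\<dots> = cinner (Vop u) (Wop u')" using V_sadj by (simp add: sadj_def)
      finally show ?thesis using u by simp
    qed
    then show "p \<in> adjoint S" using p by (simp add: adjoint_iff)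
  qed
  show "adjoint S \<subseteq> S"
  proof
    fix p assume pa: "p \<in> adjoint S"
    obtain y z where p: "p = (y, z)" by fastforce
    have e: "cinner (Wop u) y = cinner (Vop u) z" for u
      using pa p by (auto simp: adjoint_iff S_iff)
    have "cinner u (Wop y) = cinner u (Vop z)" for u
      using e[of u] W_sadj V_sadj by (simp add: sadj_def)
    then have wy: "Wop y = Vop z" using cinner_ext[of "Wop y" "Vop z"]
      by (metis cinner_commute)
    define u where "u = Vop y + Wop z"
    have "y = R y + (y - R y)" by simp
    also have "\<dots> = Vop (Vop y) + Wop (Wop y)" by (simp add: VV WW)
    also have "\<dots> = Vop (Vop y) + Wop (Vop z)" by (simp add: wy)
    also have "\<dots> = Vop u" by (simp add: u_def clinear_add[OF V_lin] VW)
    finally have y: "y = Vop u" .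
    have "Wop u = Wop (Vop y) + Wop (Wop z)" by (simp add: u_def clinear_add[OF W_lin])
    also have "\<dots> = Vop (Wop y) + (z - R z)" by (simp add: VW WW)
    also have "\<dots> = z" by (simp add: wy VV)
    finally have "z = Wop u" by simp
    then show "p \<in> S" using y p by (auto simp: S_iff)
  qed
qed

lemma S_closed: "closed S"
  using adjoint_closed[of S] S_adj by simp

lemma S_sa: "self_adjoint S"
  unfolding self_adjoint_def densely_defined_def dense_set_def
  using S_op S_adj S_dom rangeV_dense by simp

lemma S_pos: "positive_op S"
  unfolding positive_op_def
proof (intro allI impI)
  fix x z assume "(x, z) \<in> S"
  then obtain u where u: "x = Vop u" "z = Wop u" by (auto simp: S_iff)
  have V2V2: "V2 (V2 v) = Vop v" for v using V2_sq by (simp add: sqrt_of_def)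
  have V2s: "sadj V2" using V2_sq by (simp add: sqrt_of_def)
  have "cinner (Wop u) (Vop u) = cinner (Wop u) (V2 (V2 u))" by (simp add: V2V2)
  also have "\<dots> = cinner (V2 (Wop u)) (V2 u)" using V2s by (simp add: sadj_def)
  also have "\<dots> = cinner (Wop (V2 u)) (V2 u)" by (simp add: V2W)
  finally have eq: "cinner z x = cinner (Wop (V2 u)) (V2 u)" using u by simp
  show "Im (cinner z x) = 0 \<and> 0 \<le> Re (cinner z x)"
    unfolding eq using sadj_Im_zero[OF W_sadj] W_pos by simp
qed

lemma qA_norm_W: "norm (qA v) = norm (Wop (Vop v))"
proof -
  have b1: "cinner (Wop (Vop v)) (Wop (Vop v)) = cinner (Wop (Wop (Vop v))) (Vop v)"
    using W_sadj by (simp add: sadj_def)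
  have b2: "cinner (Vop v) (Vop v) = cinner (R v) v"
    using V_sadj VV[of v] by (metis sadj_def)
  have b3: "cinner (R (Vop v)) (Vop v) = cinner (R (R v)) v"
  proof -
    have "cinner (R (Vop v)) (Vop v) = cinner (Vop (R v)) (Vop v)" by (simp add: VR)
    also have "\<dots> = cinner (Vop (Vop (R v))) v" using V_sadj by (simp add: sadj_def)
    finally show ?thesis by (simp add: VV)
  qed
  have "complex_of_real ((norm (Wop (Vop v)))\<^sup>2) = cinner (R v) v - cinner (R (R v)) v"
    unfolding cinner_self_norm[symmetric] b1 WW cinner_diff_left b2 b3 ..
  also have "\<dots> = complex_of_real ((norm (qA v))\<^sup>2)" by (rule qA_norm[symmetric])
  finally have "(norm (Wop (Vop v)))\<^sup>2 = (norm (qA v))\<^sup>2" using of_real_eq_iff by blast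
  then show ?thesis using power2_eq_iff_nonneg norm_ge_zero by metis
qed

lemma rangeV_in_A: "\<exists>y. (Vop u, y) \<in> A \<and> norm y = norm (Wop u)"
proof -
  have "u \<in> closure (range Vop)" using rangeV_dense by simp
  then obtain f where f: "\<And>n. f n \<in> range Vop" "f \<longlonglongrightarrow> u" unfolding closure_sequential by blast
  have "\<forall>n. \<exists>w. f n = Vop w" using f(1) by blast
  then obtain v where v: "\<And>n. f n = Vop (v n)" by metis
  have "f = (\<lambda>n. Vop (v n))" using v by auto
  then have Vv: "(\<lambda>n. Vop (v n)) \<longlonglongrightarrow> u" using f(2) by simp
  have x: "(\<lambda>n. R (v n)) \<longlonglongrightarrow> Vop u"
    using bop_tendsto[OF V_lin V_norm Vv] by (simp add: VV)
  have g: "(\<lambda>n. Wop (Vop (v n))) \<longlonglongrightarrow> Wop u" by (rule bop_tendsto[OF W_lin W_norm Vv])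
  have dd: "dist (qA (v m)) (qA (v n)) = dist (Wop (Vop (v m))) (Wop (Vop (v n)))" for m n
    using qA_norm_W[of "v m - v n"]
    by (simp add: dist_norm clinear_diff[OF qA_lin] clinear_diff[OF V_lin] clinear_diff[OF W_lin])
  have cg: "convergent (\<lambda>n. Wop (Vop (v n)))" using g by (rule convergentI)
  have "Cauchy (\<lambda>n. qA (v n))" by (rule Cauchy_transfer[OF cg dd])
  then obtain y where y: "(\<lambda>n. qA (v n)) \<longlonglongrightarrow> y" using Cauchy_convergent_iff convergent_def by blast
  have "(\<lambda>n. (R (v n), qA (v n))) \<longlonglongrightarrow> (Vop u, y)" by (rule tendsto_Pair[OF x y])
  then have yA: "(Vop u, y) \<in> A" by (rule closed_sequentially[OF A_cl RA])
  have "(\<lambda>n. norm (qA (v n))) \<longlonglongrightarrow> norm y" by (intro tendsto_intros y)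
  moreover have "(\<lambda>n. norm (qA (v n))) \<longlonglongrightarrow> norm (Wop u)"
    using tendsto_norm[OF g] by (simp add: qA_norm_W)
  ultimately have "norm y = norm (Wop u)" by (rule LIMSEQ_unique)
  with yA show ?thesis by blast
qed

lemma domA_sub: assumes xy: "(x, y) \<in> A" shows "x \<in> range Vop"
proof -
  define G where "G = range (\<lambda>v. (R v, qA v))"
  have GA: "G \<subseteq> A" using RA by (auto simp: G_def)
  have cGA: "closure G \<subseteq> A" by (rule closure_minimal[OF GA A_cl])
  have Gadd: "(a + c, b + d) \<in> G" if ab: "(a, b) \<in> G" "(c, d) \<in> G" for a b c d
  proof -
    obtain h g where "a = R h" "b = qA h" "c = R g" "d = qA g" using ab by (auto simp: G_def)
    then show ?thesis
      by (auto simp: G_def clinear_add[OF R_lin, symmetric] clinear_add[OF qA_lin, symmetric])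
  qed
  have Gsc: "(e *\<^sub>C a, e *\<^sub>C b) \<in> G" if ab: "(a, b) \<in> G" for e a b
  proof -
    obtain h where "a = R h" "b = qA h" using ab by (auto simp: G_def)
    then show ?thesis
      by (auto simp: G_def clinear_scaleC[OF R_lin, symmetric] clinear_scaleC[OF qA_lin, symmetric])
  qed
  note cadd = closure_pair_subspace(1)[OF Gadd Gsc] and csc = closure_pair_subspace(2)[OF Gadd Gsc]
  have c0: "(0, 0) \<in> closure G"
  proof -
    have "(R 0, qA 0) \<in> G" by (simp add: G_def)
    then show ?thesis using clinear_zero[OF R_lin] clinear_zero[OF qA_lin] closure_subset by fastforce
  qed
  obtain p q where pq: "(p, q) \<in> closure G"
    and orth: "\<And>s t. (s, t) \<in> closure G \<Longrightarrow> cinner (x - p) s + cinner (y - q) t = 0"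
    using proj_HH[OF closed_closure c0 cadd csc, of x y] by blast
  have dA: "(x - p, y - q) \<in> A" using op_diff[OF A_op xy] pq cGA by blast
  have "cinner (x - p) v = 0" for v
  proof -
    have "(R v, qA v) \<in> G" by (simp add: G_def)
    then have "(R v, qA v) \<in> closure G" using closure_subset by blast
    then have "cinner (x - p) (R v) + cinner (y - q) (qA v) = 0" by (rule orth)
    moreover have "cinner (y - q) (qA v) = cinner (x - p) (v - R v)" by (rule R_ident[OF dA])
    ultimately show ?thesis by (simp add: cinner_diff_right)
  qed
  then have xp: "x = p" using cinner_eq_zero_iff[of "x - p"] by simp
  then have "(0, y - q) \<in> A" using dA by simp
  from op_zero_val[OF A_op this] have "y = q" by simp
  with xp pq have "(x, y) \<in> closure G" by simp
  then obtain f where f: "\<And>n. f n \<in> G" "f \<longlonglongrightarrow> (x, y)" unfolding closure_sequential by blast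
  have "\<forall>n. \<exists>w. f n = (R w, qA w)" using f(1) by (auto simp: G_def)
  then obtain v where v: "\<And>n. f n = (R (v n), qA (v n))" by metis
  have fx: "(\<lambda>n. R (v n)) \<longlonglongrightarrow> x" using tendsto_fst[OF f(2)] v by simp
  have fy: "(\<lambda>n. qA (v n)) \<longlonglongrightarrow> y" using tendsto_snd[OF f(2)] v by simp
  have dd: "dist (Wop (Vop (v m))) (Wop (Vop (v n))) = dist (qA (v m)) (qA (v n))" for m n
    using qA_norm_W[of "v m - v n"]
    by (simp add: dist_norm clinear_diff[OF qA_lin] clinear_diff[OF V_lin] clinear_diff[OF W_lin])
  have cg: "convergent (\<lambda>n. qA (v n))" using fy by (rule convergentI)
  have "Cauchy (\<lambda>n. Wop (Vop (v n)))" by (rule Cauchy_transfer[OF cg dd])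
  then obtain z where z: "(\<lambda>n. Wop (Vop (v n))) \<longlonglongrightarrow> z" using Cauchy_convergent_iff convergent_def by blast
  have "(\<lambda>n. (R (v n), Wop (Vop (v n)))) \<longlonglongrightarrow> (x, z)" by (rule tendsto_Pair[OF fx z])
  moreover have mS: "(R (v n), Wop (Vop (v n))) \<in> S" for n by (auto simp: S_iff VV[symmetric])
  ultimately have "(x, z) \<in> S" by (intro closed_sequentially[OF S_closed mS])
  then show ?thesis by (auto simp: S_iff)
qed

lemma domA_eq: "op_dom A = op_dom S"
proof
  show "op_dom A \<subseteq> op_dom S" using domA_sub S_dom by (auto simp: op_dom_iff)
  show "op_dom S \<subseteq> op_dom A"
  proof
    fix x assume "x \<in> op_dom S"
    then obtain u where "x = Vop u" using S_dom by auto
    then show "x \<in> op_dom A" using rangeV_in_A[of u] by (auto simp: op_dom_iff)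
  qed
qed

lemma S_norm: "(x, y) \<in> A \<Longrightarrow> (x, z) \<in> S \<Longrightarrow> norm z = norm y"
proof -
  assume xy: "(x, y) \<in> A" and xz: "(x, z) \<in> S"
  then obtain u where u: "x = Vop u" "z = Wop u" by (auto simp: S_iff)
  obtain y' where y': "(Vop u, y') \<in> A" "norm y' = norm (Wop u)" using rangeV_in_A by blast
  have "y = y'" using op_single[OF A_op xy] y'(1) u by simp
  then show ?thesis using y' u by simp
qed

end

theorem abs_exists:
  fixes A :: "'a::chilbert_space lop"
  assumes "closed_operator A" "densely_defined A"
  shows "\<exists>S. self_adjoint S \<and> positive_op S \<and> closed S \<and> op_dom S = op_dom A
    \<and> (\<forall>x y z. (x, y) \<in> A \<longrightarrow> (x, z) \<in> S \<longrightarrow> norm z = norm y)"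
proof -
  interpret cdop A using assms by unfold_locales
  show ?thesis using S_sa S_pos S_closed domA_eq S_norm by metis
qed


definition orthon :: "(nat \<Rightarrow> 'a::complex_inner) \<Rightarrow> bool" where
  "orthon e \<longleftrightarrow> (\<forall>n m. cinner (e n) (e m) = (if n = m then 1 else 0))"

lemma sums_cinner_left:
  fixes f :: "nat \<Rightarrow> 'a::complex_inner"
  shows "f sums s \<Longrightarrow> (\<lambda>n. cinner (f n) y) sums cinner s y"
  by (rule bounded_linear.sums[OF bounded_bilinear.bounded_linear_left[OF bounded_bilinear_cinner]])

lemma sums_cinner_right:
  fixes f :: "nat \<Rightarrow> 'a::complex_inner"
  shows "f sums s \<Longrightarrow> (\<lambda>n. cinner y (f n)) sums cinner y s"
  by (rule bounded_linear.sums[OF bounded_bilinear.bounded_linear_right[OF bounded_bilinear_cinner]])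

lemma ortho_sum_inner:
  assumes o: "orthon e" and F: "finite F"
  shows "cinner (\<Sum>n\<in>F. c n *\<^sub>C e n) (e m) = (if m \<in> F then c m else 0)"
proof -
  have "cinner (\<Sum>n\<in>F. c n *\<^sub>C e n) (e m) = (\<Sum>n\<in>F. c n * (if n = m then 1 else 0))"
    using o by (simp add: cinner_sum_left cinner_scaleC_left orthon_def)
  also have "\<dots> = (\<Sum>n\<in>F. if n = m then c n else 0)" by (rule sum.cong) auto
  also have "\<dots> = (if m \<in> F then c m else 0)" using F by (simp add: sum.delta')
  finally show ?thesis .
qed

lemma ortho_sum_norm:
  assumes o: "orthon e" and F: "finite F"
  shows "(norm (\<Sum>n\<in>F. c n *\<^sub>C e n))\<^sup>2 = (\<Sum>n\<in>F. (cmod (c n))\<^sup>2)"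
proof -
  have "cinner (\<Sum>n\<in>F. c n *\<^sub>C e n) (\<Sum>n\<in>F. c n *\<^sub>C e n)
      = (\<Sum>m\<in>F. cnj (c m) * cinner (\<Sum>n\<in>F. c n *\<^sub>C e n) (e m))"
    by (simp add: cinner_sum_right cinner_scaleC_right)
  also have "\<dots> = (\<Sum>m\<in>F. cnj (c m) * c m)"
    by (rule sum.cong) (auto simp: ortho_sum_inner[OF o F])
  also have "\<dots> = (\<Sum>m\<in>F. complex_of_real ((cmod (c m))\<^sup>2))"
    by (rule sum.cong) (simp_all only: complex_norm_square mult.commute)
  finally have "complex_of_real ((norm (\<Sum>n\<in>F. c n *\<^sub>C e n))\<^sup>2) = complex_of_real (\<Sum>m\<in>F. (cmod (c m))\<^sup>2)"
    by (simp add: cinner_self_norm)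
  then show ?thesis using of_real_eq_iff by blast
qed

lemma ortho_series:
  fixes e :: "nat \<Rightarrow> 'a::chilbert_space"
  assumes o: "orthon e" and c: "summable (\<lambda>n. (cmod (c n))\<^sup>2)"
  shows "summable (\<lambda>n. c n *\<^sub>C e n)"
proof -
  have "\<exists>N. \<forall>m\<ge>N. \<forall>n. norm (\<Sum>k\<in>{m..<n}. c k *\<^sub>C e k) < r" if r: "r > 0" for r
  proof -
    obtain N where N: "\<And>m n. m \<ge> N \<Longrightarrow> norm (\<Sum>k\<in>{m..<n}. (cmod (c k))\<^sup>2) < r\<^sup>2"
      using c[unfolded summable_Cauchy] r by (meson zero_less_power)
    have "norm (\<Sum>k\<in>{m..<n}. c k *\<^sub>C e k) < r" if "m \<ge> N" for m n
    proof -
      have "(norm (\<Sum>k\<in>{m..<n}. c k *\<^sub>C e k))\<^sup>2 = (\<Sum>k\<in>{m..<n}. (cmod (c k))\<^sup>2)"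
        by (rule ortho_sum_norm[OF o]) simp
      also have "\<dots> < r\<^sup>2" using N[OF that, of n] by (simp add: sum_nonneg)
      finally show ?thesis using r by (simp add: power_less_imp_less_base)
    qed
    then show ?thesis by blast
  qed
  then show ?thesis unfolding summable_Cauchy by blast
qed

lemma ortho_series_coeff:
  fixes e :: "nat \<Rightarrow> 'a::chilbert_space"
  assumes o: "orthon e" and s: "(\<lambda>n. c n *\<^sub>C e n) sums w"
  shows "cinner w (e m) = c m"
proof -
  have "(\<lambda>n. cinner (c n *\<^sub>C e n) (e m)) sums cinner w (e m)" by (rule sums_cinner_left[OF s])
  moreover have "(\<lambda>n. cinner (c n *\<^sub>C e n) (e m)) = (\<lambda>n. if n = m then c n else 0)"
    using o by (auto simp: cinner_scaleC_left orthon_def)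
  ultimately show ?thesis using sums_single[of m c] sums_unique2 by metis
qed

lemma ortho_series_inner:
  fixes e :: "nat \<Rightarrow> 'a::chilbert_space"
  assumes o: "orthon e" and s: "(\<lambda>n. c n *\<^sub>C e n) sums w" and t: "(\<lambda>n. d n *\<^sub>C e n) sums v"
  shows "(\<lambda>n. c n * cnj (d n)) sums cinner w v"
proof -
  have "(\<lambda>n. cinner (c n *\<^sub>C e n) v) sums cinner w v" by (rule sums_cinner_left[OF s])
  moreover have "cinner (c n *\<^sub>C e n) v = c n * cnj (d n)" for n
  proof -
    have "cinner (e n) v = cnj (cinner v (e n))" by (rule cinner_commute)
    then show ?thesis using ortho_series_coeff[OF o t, of n] by (simp add: cinner_scaleC_left)
  qed
  ultimately show ?thesis by simp
qed

lemma ortho_series_norm: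
  fixes e :: "nat \<Rightarrow> 'a::chilbert_space"
  assumes o: "orthon e" and s: "(\<lambda>n. c n *\<^sub>C e n) sums w"
  shows "(\<lambda>n. (cmod (c n))\<^sup>2) sums (norm w)\<^sup>2"
proof -
  have "(\<lambda>n. c n * cnj (c n)) sums cinner w w" by (rule ortho_series_inner[OF o s s])
  moreover have "(\<lambda>n. c n * cnj (c n)) = (\<lambda>n. complex_of_real ((cmod (c n))\<^sup>2))"
    by (simp only: complex_norm_square)
  moreover have "cinner w w = complex_of_real ((norm w)\<^sup>2)" by (rule cinner_self_norm)
  ultimately have "(\<lambda>n. complex_of_real ((cmod (c n))\<^sup>2)) sums complex_of_real ((norm w)\<^sup>2)"
    by simp
  then show ?thesis by (simp only: sums_of_real_iff)
qed

section \<open>Gram-Schmidt\<close>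

function gs :: "(nat \<Rightarrow> 'a::complex_inner) \<Rightarrow> nat \<Rightarrow> 'a" where
  "gs v n = (let u = v n - (\<Sum>k\<in>{..<n}. cinner (v n) (gs v k) *\<^sub>C gs v k)
             in (1 / complex_of_real (norm u)) *\<^sub>C u)"
  by auto
termination by (relation "Wellfounded.measure snd") auto

declare gs.simps [simp del]

lemma gs_eq: "gs v n = (1 / complex_of_real (norm (v n - (\<Sum>k<n. cinner (v n) (gs v k) *\<^sub>C gs v k))))
   *\<^sub>C (v n - (\<Sum>k<n. cinner (v n) (gs v k) *\<^sub>C gs v k))"
  by (subst gs.simps) (simp only: Let_def)

lemma gs_perp_phi:
  assumes b: "biorthogonal \<phi> \<psi>"
  shows "k < j \<Longrightarrow> cinner (\<phi> j) (gs \<psi> k) = 0"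
proof (induction k arbitrary: j rule: less_induct)
  case (less k)
  have "cinner (\<phi> j) (\<psi> k) = 0" using b less.prems by (simp add: biorthogonal_def)
  moreover have "cinner (\<phi> j) (gs \<psi> i) = 0" if "i < k" for i using less.IH[OF that] less.prems that by simp
  ultimately show ?case
    by (subst gs_eq) (simp add: cinner_scaleC_right cinner_diff_right cinner_sum_right)
qed

lemma gs_orthon:
  assumes b: "biorthogonal \<phi> \<psi>"
  shows "orthon (gs \<psi>)"
proof -
  define u where "u n = \<psi> n - (\<Sum>k<n. cinner (\<psi> n) (gs \<psi> k) *\<^sub>C gs \<psi> k)" for n
  have gsu: "gs \<psi> n = (1 / complex_of_real (norm (u n))) *\<^sub>C u n" for n
    unfolding u_def by (rule gs_eq)
  have une: "u n \<noteq> 0" for n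
  proof -
    have "cinner (\<phi> n) (gs \<psi> k) = 0" if "k < n" for k using gs_perp_phi[OF b that] .
    then have "cinner (\<phi> n) (u n) = cinner (\<phi> n) (\<psi> n)"
      by (simp add: u_def cinner_diff_right cinner_sum_right cinner_scaleC_right)
    also have "\<dots> = 1" using b by (simp add: biorthogonal_def)
    finally show ?thesis by auto
  qed
  have nrm: "cinner (gs \<psi> n) (gs \<psi> n) = 1" for n
  proof -
    have "cinner (gs \<psi> n) (gs \<psi> n) = complex_of_real ((norm (gs \<psi> n))\<^sup>2)" by (rule cinner_self_norm)
    moreover have "norm (gs \<psi> n) = 1" using une[of n] by (simp add: gsu norm_scaleC norm_divide)
    ultimately show ?thesis by simp
  qed
  have perp: "\<forall>m<n. cinner (gs \<psi> n) (gs \<psi> m) = 0" for n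
  proof (induction n rule: less_induct)
    case (less n)
    show ?case
    proof (intro allI impI)
      fix m assume mn: "m < n"
      have o: "cinner (gs \<psi> k) (gs \<psi> m) = (if k = m then 1 else 0)" if "k < n" for k
      proof (cases "k = m")
        case True then show ?thesis using nrm by simp
      next
        case False
        show ?thesis
        proof (cases "m < k")
          case True then show ?thesis using less.IH[OF \<open>k < n\<close>] False by simp
        next
          case f2: False
          then have "k < m" using False by simp
          then have "cinner (gs \<psi> m) (gs \<psi> k) = 0" using less.IH[OF mn] by simp
          then have "cinner (gs \<psi> k) (gs \<psi> m) = 0" using cinner_commute[of "gs \<psi> k" "gs \<psi> m"] by simp
          then show ?thesis using False by simp
        qed
      qed
      have "cinner (u n) (gs \<psi> m) = cinner (\<psi> n) (gs \<psi> m)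
          - (\<Sum>k<n. cinner (\<psi> n) (gs \<psi> k) * cinner (gs \<psi> k) (gs \<psi> m))"
        by (simp add: u_def cinner_diff_left cinner_sum_left cinner_scaleC_left)
      also have "(\<Sum>k<n. cinner (\<psi> n) (gs \<psi> k) * cinner (gs \<psi> k) (gs \<psi> m))
          = (\<Sum>k<n. if k = m then cinner (\<psi> n) (gs \<psi> k) else 0)"
        by (rule sum.cong) (auto simp: o)
      also have "\<dots> = cinner (\<psi> n) (gs \<psi> m)" using mn by (simp add: sum.delta')
      finally have "cinner (u n) (gs \<psi> m) = 0" by simp
      then show "cinner (gs \<psi> n) (gs \<psi> m) = 0" by (simp add: gsu cinner_scaleC_left)
    qed
  qed
  show ?thesis unfolding orthon_def
  proof (intro allI)
    fix n m
    show "cinner (gs \<psi> n) (gs \<psi> m) = (if n = m then 1 else 0)"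
    proof (cases n m rule: linorder_cases)
      case less
      then have "cinner (gs \<psi> m) (gs \<psi> n) = 0" using perp by blast
      then have "cinner (gs \<psi> n) (gs \<psi> m) = 0" using cinner_commute[of "gs \<psi> n" "gs \<psi> m"] by simp
      then show ?thesis using less by simp
    next
      case equal then show ?thesis using nrm by simp
    next
      case greater then show ?thesis using perp by auto
    qed
  qed
qed


lemma cspan_csubspace: "csubspace (cspan X)"
proof -
  have z: "0 \<in> cspan X" unfolding cspan_def by (rule CollectI, rule exI[of _ "{}"]) auto
  have a: "x + y \<in> cspan X" if xy: "x \<in> cspan X" "y \<in> cspan X" for x y
  proof -
    obtain F c where F: "finite F" "F \<subseteq> X" "x = (\<Sum>b\<in>F. c b *\<^sub>C b)" using xy(1) by (auto simp: cspan_def)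
    obtain G d where G: "finite G" "G \<subseteq> X" "y = (\<Sum>b\<in>G. d b *\<^sub>C b)" using xy(2) by (auto simp: cspan_def)
    define c' where "c' b = (if b \<in> F then c b else 0)" for b
    define d' where "d' b = (if b \<in> G then d b else 0)" for b
    have "x = (\<Sum>b\<in>F \<union> G. c' b *\<^sub>C b)"
      unfolding F(3) by (rule sum.mono_neutral_cong_left) (auto simp: F G c'_def)
    moreover have "y = (\<Sum>b\<in>F \<union> G. d' b *\<^sub>C b)"
      unfolding G(3) by (rule sum.mono_neutral_cong_left) (auto simp: F G d'_def)
    ultimately have "x + y = (\<Sum>b\<in>F \<union> G. (c' b + d' b) *\<^sub>C b)"
      by (simp add: sum.distrib scaleC_add_left)
    then show ?thesis unfolding cspan_def
      by (intro CollectI exI[of _ "F \<union> G"] exI[of _ "\<lambda>b. c' b + d' b"]) (use F G in auto)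
  qed
  have s: "a *\<^sub>C x \<in> cspan X" if xs: "x \<in> cspan X" for a x
  proof -
    obtain F c where F: "finite F" "F \<subseteq> X" "x = (\<Sum>b\<in>F. c b *\<^sub>C b)" using xs by (auto simp: cspan_def)
    have "a *\<^sub>C x = (\<Sum>b\<in>F. (a * c b) *\<^sub>C b)" by (simp add: F(3) scaleC_sum_right)
    then show ?thesis unfolding cspan_def
      by (intro CollectI exI[of _ F] exI[of _ "\<lambda>b. a * c b"]) (use F in auto)
  qed
  show ?thesis unfolding csubspace_def using z a s by blast
qed

lemma cspan_orth:
  assumes "\<And>b. b \<in> X \<Longrightarrow> cinner b h = 0" "m \<in> cspan X"
  shows "cinner m h = 0"
proof -
  obtain F c where F: "finite F" "F \<subseteq> X" "m = (\<Sum>b\<in>F. c b *\<^sub>C b)" using assms(2) by (auto simp: cspan_def)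
  have "cinner m h = (\<Sum>b\<in>F. c b * cinner b h)" by (simp add: F(3) cinner_sum_left cinner_scaleC_left)
  also have "\<dots> = 0" using assms(1) F(2) by (auto intro!: sum.neutral)
  finally show ?thesis .
qed

lemma cspan_single: "x \<in> X \<Longrightarrow> x \<in> cspan X"
  unfolding cspan_def by (rule CollectI, rule exI[of _ "{x}"], rule exI[of _ "\<lambda>_. 1"]) simp

lemma inverse_inverse [simp]: "op_inverse (op_inverse T) = T"
  by (auto simp: op_inverse_def)

lemma adjoint_inverse: "adjoint (op_inverse T) = op_inverse (adjoint T)"
  by (auto simp: adjoint_def op_inverse_def)

lemma op_inverse_mem [simp]: "(x, y) \<in> op_inverse T \<longleftrightarrow> (y, x) \<in> T"
  by (simp add: op_inverse_def)

lemma closed_inverse: "closed T \<Longrightarrow> closed (op_inverse (T :: ('a::topological_space \<times> 'a) set))"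
proof -
  assume c: "closed T"
  have eq: "op_inverse T = (\<lambda>p. (snd p, fst p)) -` T" by (auto simp: op_inverse_def)
  show ?thesis unfolding eq by (rule closed_vimage[OF c]) (intro continuous_intros)
qed

lemma inverse_is_operator:
  assumes "is_operator T" "\<And>x. (x, 0) \<in> T \<Longrightarrow> x = 0"
  shows "is_operator (op_inverse T)"
  using assms unfolding is_operator_def op_inverse_def by auto

lemma op_dom_inverse: "op_dom (op_inverse T) = op_range T"
  by (force simp: op_dom_def op_range_def op_inverse_def)

lemma graph_inner_eq:
  fixes A S :: "'a::complex_inner lop"
  assumes A: "is_operator A" and S: "is_operator S"
    and n: "\<And>x y z. (x, y) \<in> A \<Longrightarrow> (x, z) \<in> S \<Longrightarrow> norm z = norm y"
    and xy: "(x, y) \<in> A" "(x', y') \<in> A" and xz: "(x, z) \<in> S" "(x', z') \<in> S"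
  shows "cinner z z' = cinner y y'"
proof -
  have nc: "norm (z + c *\<^sub>C z') = norm (y + c *\<^sub>C y')" for c
    using n[OF op_add[OF A xy(1) op_scale[OF A xy(2)]] op_add[OF S xz(1) op_scale[OF S xz(2)]]] .
  have nd: "norm (z - c *\<^sub>C z') = norm (y - c *\<^sub>C y')" for c
    using n[OF op_diff[OF A xy(1) op_scale[OF A xy(2)]] op_diff[OF S xz(1) op_scale[OF S xz(2)]]] .
  have "4 * cinner z z' = 4 * cinner y y'"
    unfolding polarization using nc[of 1] nd[of 1] nc[of \<i>] nd[of \<i>] by simp
  then show ?thesis by simp
qed

locale mainloc =
  fixes \<phi> \<psi> :: "nat \<Rightarrow> 'a::chilbert_space" and D E :: "'a set"
  assumes bio: "biorthogonal \<phi> \<psi>"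
    and Dsub: "csubspace D" and Ddense: "dense_set D"
    and Esub: "csubspace E" and Edense: "dense_set E"
    and qb: "quasi_basis \<phi> \<psi> D E"
    and psiD: "cspan (range \<psi>) \<subseteq> D" and Dphi: "D \<subseteq> seq_domain \<phi>"
    and phiE: "cspan (range \<phi>) \<subseteq> E" and Epsi: "E \<subseteq> seq_domain \<psi>"
begin

definition e where "e = gs \<psi>"

lemma e_orthon: "orthon e" unfolding e_def by (rule gs_orthon[OF bio])

lemma psi_D: "\<psi> m \<in> D" using psiD cspan_single[of "\<psi> m" "range \<psi>"] by blast

lemma D_add: "x \<in> D \<Longrightarrow> y \<in> D \<Longrightarrow> x + y \<in> D" using Dsub by (simp add: csubspace_def)
lemma D_scale: "x \<in> D \<Longrightarrow> c *\<^sub>C x \<in> D" using Dsub by (simp add: csubspace_def)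
lemma D_zero: "0 \<in> D" using Dsub by (simp add: csubspace_def)

lemma coef_summable: "x \<in> D \<Longrightarrow> summable (\<lambda>n. (cmod (cinner x (\<phi> n)))\<^sup>2)"
  using Dphi by (auto simp: seq_domain_def)

definition Tv where "Tv x = (\<Sum>n. cinner x (\<phi> n) *\<^sub>C e n)"

lemma Tv_sums: "x \<in> D \<Longrightarrow> (\<lambda>n. cinner x (\<phi> n) *\<^sub>C e n) sums Tv x"
  unfolding Tv_def using ortho_series[OF e_orthon coef_summable] summable_sums by blast

definition A0 where "A0 = op_restrict (T_op e \<phi>) D"

lemma A0_iff: "(x, y) \<in> A0 \<longleftrightarrow> x \<in> D \<and> y = Tv x"
proof
  assume "(x, y) \<in> A0"
  then have "x \<in> D" "(\<lambda>n. cinner x (\<phi> n) *\<^sub>C e n) sums y"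
    by (auto simp: A0_def op_restrict_def T_op_def)
  then show "x \<in> D \<and> y = Tv x" using Tv_sums sums_unique2 by blast
next
  assume "x \<in> D \<and> y = Tv x"
  then show "(x, y) \<in> A0" using Tv_sums Dphi by (auto simp: A0_def op_restrict_def T_op_def)
qed

lemma scaleC_sums: "f sums s \<Longrightarrow> (\<lambda>n. c *\<^sub>C f n) sums (c *\<^sub>C s :: 'a)"
  by (rule bounded_linear.sums[OF bounded_bilinear.bounded_linear_right[OF bounded_bilinear_scaleC]])

lemma A0_add: "(x, y) \<in> A0 \<Longrightarrow> (u, v) \<in> A0 \<Longrightarrow> (x + u, y + v) \<in> A0"
proof -
  assume a: "(x, y) \<in> A0" "(u, v) \<in> A0"
  then have xu: "x \<in> D" "u \<in> D" and yv: "y = Tv x" "v = Tv u" by (auto simp: A0_iff)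
  have "(\<lambda>n. cinner x (\<phi> n) *\<^sub>C e n + cinner u (\<phi> n) *\<^sub>C e n) sums (Tv x + Tv u)"
    by (intro sums_add Tv_sums xu)
  then have "(\<lambda>n. cinner (x + u) (\<phi> n) *\<^sub>C e n) sums (Tv x + Tv u)"
    by (simp add: cinner_add_left scaleC_add_left)
  moreover have "x + u \<in> D" using D_add xu by blast
  ultimately show ?thesis using Tv_sums sums_unique2 yv by (metis A0_iff)
qed

lemma A0_scale: "(x, y) \<in> A0 \<Longrightarrow> (c *\<^sub>C x, c *\<^sub>C y) \<in> A0"
proof -
  assume a: "(x, y) \<in> A0"
  then have xD: "x \<in> D" and y: "y = Tv x" by (auto simp: A0_iff)
  have "(\<lambda>n. c *\<^sub>C (cinner x (\<phi> n) *\<^sub>C e n)) sums (c *\<^sub>C Tv x)"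
    by (intro scaleC_sums Tv_sums xD)
  then have "(\<lambda>n. cinner (c *\<^sub>C x) (\<phi> n) *\<^sub>C e n) sums (c *\<^sub>C Tv x)"
    by (simp add: cinner_scaleC_left)
  moreover have "c *\<^sub>C x \<in> D" using D_scale xD by blast
  ultimately show ?thesis using Tv_sums sums_unique2 y by (metis A0_iff)
qed

lemma A0_zero: "(0, 0) \<in> A0"
  using A0_scale[of "\<psi> 0" "Tv (\<psi> 0)" 0] psi_D by (simp add: A0_iff)

lemma coef_psi: "cinner (\<psi> m) (\<phi> n) = (if n = m then 1 else 0)"
proof -
  have "cinner (\<psi> m) (\<phi> n) = cnj (cinner (\<phi> n) (\<psi> m))" by (rule cinner_commute)
  then show ?thesis using bio by (simp add: biorthogonal_def)
qed

lemma psi_A0: "(\<psi> m, e m) \<in> A0"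
proof -
  have "(\<lambda>n. cinner (\<psi> m) (\<phi> n) *\<^sub>C e n) = (\<lambda>n. if n = m then e n else 0)"
    by (auto simp: coef_psi)
  then have "(\<lambda>n. cinner (\<psi> m) (\<phi> n) *\<^sub>C e n) sums e m" using sums_single[of m e] by simp
  then show ?thesis using Tv_sums[OF psi_D] sums_unique2 psi_D by (metis A0_iff)
qed

definition A where "A = closure A0"

lemma A_op: "is_operator A"
proof -
  note cadd = closure_pair_subspace(1)[OF A0_add A0_scale]
  note csc = closure_pair_subspace(2)[OF A0_add A0_scale]
  have z: "(0, 0) \<in> A" using A0_zero closure_subset by (auto simp: A_def)
  have v: "y = 0" if y: "(0, y) \<in> A" for y
  proof -
    obtain g where g: "\<And>n. g n \<in> A0" "g \<longlonglongrightarrow> (0, y)" using y unfolding A_def closure_sequential by blast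
    have g1: "(\<lambda>k. fst (g k)) \<longlonglongrightarrow> 0" and g2: "(\<lambda>k. snd (g k)) \<longlonglongrightarrow> y"
      using tendsto_fst[OF g(2)] tendsto_snd[OF g(2)] by simp_all
    have gD: "fst (g k) \<in> D" and gT: "snd (g k) = Tv (fst (g k))" for k
      using g(1)[of k] A0_iff[of "fst (g k)" "snd (g k)"] by auto
    have ye: "cinner y (e m) = 0" for m
    proof -
      have "(\<lambda>k. cinner (snd (g k)) (e m)) \<longlonglongrightarrow> cinner y (e m)" by (intro tendsto_intros g2)
      moreover have "cinner (snd (g k)) (e m) = cinner (fst (g k)) (\<phi> m)" for k
        using ortho_series_coeff[OF e_orthon Tv_sums[OF gD[of k]]] gT by simp
      moreover have "(\<lambda>k. cinner (fst (g k)) (\<phi> m)) \<longlonglongrightarrow> cinner 0 (\<phi> m)" by (intro tendsto_intros g1)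
      ultimately have "(\<lambda>k. cinner (snd (g k)) (e m)) \<longlonglongrightarrow> 0" by simp
      with \<open>(\<lambda>k. cinner (snd (g k)) (e m)) \<longlonglongrightarrow> cinner y (e m)\<close> show ?thesis by (rule LIMSEQ_unique)
    qed
    have "cinner (snd (g k)) y = 0" for k
    proof -
      have "(\<lambda>n. cinner (cinner (fst (g k)) (\<phi> n) *\<^sub>C e n) y) sums cinner (Tv (fst (g k))) y"
        by (rule sums_cinner_left[OF Tv_sums[OF gD]])
      moreover have z0: "cinner (cinner (fst (g k)) (\<phi> n) *\<^sub>C e n) y = 0" for n
      proof -
        have "cinner (e n) y = cnj (cinner y (e n))" by (rule cinner_commute)
        then show ?thesis by (simp add: cinner_scaleC_left ye)
      qed
      ultimately have "(\<lambda>n. 0) sums cinner (Tv (fst (g k))) y" by (simp only: z0)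
      then have "cinner (Tv (fst (g k))) y = 0" using sums_zero sums_unique2 by blast
      then show ?thesis using gT[of k] by simp
    qed
    then have "(\<lambda>k. cinner (snd (g k)) y) \<longlonglongrightarrow> 0" by simp
    moreover have "(\<lambda>k. cinner (snd (g k)) y) \<longlonglongrightarrow> cinner y y" by (intro tendsto_intros g2)
    ultimately have "cinner y y = 0" using LIMSEQ_unique by metis
    then show ?thesis using cinner_eq_zero_iff by blast
  qed
  show ?thesis unfolding is_operator_def using z cadd csc v unfolding A_def by blast
qed

lemma D_domA: "D \<subseteq> op_dom A"
proof
  fix x assume "x \<in> D"
  then have "(x, Tv x) \<in> A" using A0_iff closure_subset by (auto simp: A_def)
  then show "x \<in> op_dom A" by (auto simp: op_dom_iff)
qed

lemma A_closed_op: "closed_operator A"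
  using A_op by (simp add: closed_operator_def A_def)

lemma A_dense: "densely_defined A"
proof -
  have "closure D \<subseteq> closure (op_dom A)" by (rule closure_mono[OF D_domA])
  then show ?thesis using Ddense by (auto simp: densely_defined_def dense_set_def)
qed

definition Sop where "Sop = (SOME S. self_adjoint S \<and> positive_op S \<and> closed S \<and> op_dom S = op_dom A
    \<and> (\<forall>x y z. (x, y) \<in> A \<longrightarrow> (x, z) \<in> S \<longrightarrow> norm z = norm y))"

lemma S_props: "self_adjoint Sop \<and> positive_op Sop \<and> closed Sop \<and> op_dom Sop = op_dom A
    \<and> (\<forall>x y z. (x, y) \<in> A \<longrightarrow> (x, z) \<in> Sop \<longrightarrow> norm z = norm y)"
  unfolding Sop_def by (rule someI_ex[OF abs_exists[OF A_closed_op A_dense]])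

lemma S_sa: "self_adjoint Sop" and S_pos: "positive_op Sop" and S_cl: "closed Sop"
  and S_dom: "op_dom Sop = op_dom A"
  and S_norm: "(x, y) \<in> A \<Longrightarrow> (x, z) \<in> Sop \<Longrightarrow> norm z = norm y"
  using S_props by blast+

lemma S_op: "is_operator Sop" using S_sa by (simp add: self_adjoint_def)
lemma S_adj: "adjoint Sop = Sop" using S_sa by (simp add: self_adjoint_def)

lemma S_inner: "(x, y) \<in> A \<Longrightarrow> (x', y') \<in> A \<Longrightarrow> (x, z) \<in> Sop \<Longrightarrow> (x', z') \<in> Sop
    \<Longrightarrow> cinner z z' = cinner y y'"
  by (rule graph_inner_eq[OF A_op S_op S_norm])

lemma A0_A: "(x, y) \<in> A0 \<Longrightarrow> (x, y) \<in> A"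
  using closure_subset by (auto simp: A_def)

lemma A_inj: assumes x0: "(x, 0) \<in> A" shows "x = 0"
proof (rule dense_orth_zero[OF Edense])
  fix w assume wE: "w \<in> E"
  have ws: "summable (\<lambda>n. (cmod (cinner w (\<psi> n)))\<^sup>2)" using Epsi wE by (auto simp: seq_domain_def)
  obtain uw where uw: "(\<lambda>n. cinner w (\<psi> n) *\<^sub>C e n) sums uw"
    using ortho_series[OF e_orthon ws] summable_sums by blast
  have key: "cinner x' w = cinner (Tv x') uw" if xD: "x' \<in> D" for x'
  proof -
    have "(\<lambda>k. cinner x' (\<phi> k) * cinner (\<psi> k) w) sums cinner x' w" using qb xD wE by (simp add: quasi_basis_def)
    moreover have "(\<lambda>n. cinner x' (\<phi> n) * cnj (cinner w (\<psi> n))) sums cinner (Tv x') uw"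
      by (rule ortho_series_inner[OF e_orthon Tv_sums[OF xD] uw])
    moreover have "cnj (cinner w (\<psi> n)) = cinner (\<psi> n) w" for n using cinner_commute[of "\<psi> n" w] by simp
    ultimately show ?thesis using sums_unique2 by simp
  qed
  obtain g where g: "\<And>n. g n \<in> A0" "g \<longlonglongrightarrow> (x, 0)" using x0 unfolding A_def closure_sequential by blast
  have g1: "(\<lambda>k. fst (g k)) \<longlonglongrightarrow> x" and g2: "(\<lambda>k. snd (g k)) \<longlonglongrightarrow> 0"
    using tendsto_fst[OF g(2)] tendsto_snd[OF g(2)] by simp_all
  have gD: "fst (g k) \<in> D" and gT: "snd (g k) = Tv (fst (g k))" for k
    using g(1)[of k] A0_iff[of "fst (g k)" "snd (g k)"] by auto
  have "(\<lambda>k. cinner (fst (g k)) w) \<longlonglongrightarrow> cinner x w" by (intro tendsto_intros g1)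
  moreover have "(\<lambda>k. cinner (fst (g k)) w) = (\<lambda>k. cinner (snd (g k)) uw)"
    using key[OF gD] gT by simp
  moreover have "(\<lambda>k. cinner (snd (g k)) uw) \<longlonglongrightarrow> cinner 0 uw" by (intro tendsto_intros g2)
  ultimately have "(\<lambda>k. cinner (fst (g k)) w) \<longlonglongrightarrow> 0" by simp
  with \<open>(\<lambda>k. cinner (fst (g k)) w) \<longlonglongrightarrow> cinner x w\<close> have "cinner x w = 0" by (rule LIMSEQ_unique)
  then show "cinner w x = 0" using cinner_commute[of w x] by simp
qed

lemma S_inj: assumes x0: "(x, 0) \<in> Sop" shows "x = 0"
proof -
  have "x \<in> op_dom A" using x0 S_dom by (auto simp: op_dom_iff)
  then obtain y where xy: "(x, y) \<in> A" by (auto simp: op_dom_iff)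
  then have "norm y = 0" using S_norm[OF xy x0] by simp
  then show ?thesis using xy A_inj by simp
qed

lemma D_domS: "x \<in> D \<Longrightarrow> \<exists>z. (x, z) \<in> Sop"
  using D_domA S_dom by (auto simp: op_dom_iff)

definition f where "f m = (SOME z. (\<psi> m, z) \<in> Sop)"

lemma f_S: "(\<psi> m, f m) \<in> Sop"
  unfolding f_def using D_domS[OF psi_D] by (rule someI_ex)

lemma f_inner: "(x, y) \<in> A \<Longrightarrow> (x, z) \<in> Sop \<Longrightarrow> cinner z (f m) = cinner y (e m)"
  using S_inner[OF _ A0_A[OF psi_A0] _ f_S] by blast

lemma f_orthon: "orthon f"
  unfolding orthon_def using f_inner[OF A0_A[OF psi_A0] f_S] e_orthon by (simp add: orthon_def)

lemma S_coef: "x \<in> D \<Longrightarrow> (x, z) \<in> Sop \<Longrightarrow> cinner z (f m) = cinner x (\<phi> m)"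
proof -
  assume xD: "x \<in> D" and xz: "(x, z) \<in> Sop"
  have "(x, Tv x) \<in> A" using A0_A A0_iff xD by blast
  then have "cinner z (f m) = cinner (Tv x) (e m)" using f_inner xz by blast
  also have "\<dots> = cinner x (\<phi> m)" by (rule ortho_series_coeff[OF e_orthon Tv_sums[OF xD]])
  finally show ?thesis .
qed

lemma S_sums: assumes xD: "x \<in> D" and xz: "(x, z) \<in> Sop"
  shows "(\<lambda>n. cinner x (\<phi> n) *\<^sub>C f n) sums z"
proof -
  obtain w where w: "(\<lambda>n. cinner x (\<phi> n) *\<^sub>C f n) sums w"
    using ortho_series[OF f_orthon coef_summable[OF xD]] summable_sums by blast
  have nw: "(\<lambda>n. (cmod (cinner x (\<phi> n)))\<^sup>2) sums (norm w)\<^sup>2" by (rule ortho_series_norm[OF f_orthon w])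
  have nT: "(\<lambda>n. (cmod (cinner x (\<phi> n)))\<^sup>2) sums (norm (Tv x))\<^sup>2" by (rule ortho_series_norm[OF e_orthon Tv_sums[OF xD]])
  have xA: "(x, Tv x) \<in> A" using A0_A A0_iff xD by blast
  have nz: "norm z = norm (Tv x)" by (rule S_norm[OF xA xz])
  have "(norm w)\<^sup>2 = (norm (Tv x))\<^sup>2" using sums_unique2[OF nw nT] .
  then have nzw: "norm w = norm z" using nz by (simp add: power2_eq_iff_nonneg)
  have "(\<lambda>n. cinner z (cinner x (\<phi> n) *\<^sub>C f n)) sums cinner z w" by (rule sums_cinner_right[OF w])
  moreover have "cinner z (cinner x (\<phi> n) *\<^sub>C f n) = complex_of_real ((cmod (cinner x (\<phi> n)))\<^sup>2)" for n
  proof -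
    have "cinner z (cinner x (\<phi> n) *\<^sub>C f n) = cnj (cinner x (\<phi> n)) * cinner x (\<phi> n)"
      by (simp add: cinner_scaleC_right S_coef[OF xD xz])
    also have "\<dots> = complex_of_real ((cmod (cinner x (\<phi> n)))\<^sup>2)"
      by (simp only: complex_norm_square mult.commute)
    finally show ?thesis .
  qed
  ultimately have "(\<lambda>n. complex_of_real ((cmod (cinner x (\<phi> n)))\<^sup>2)) sums cinner z w" by simp
  moreover have "(\<lambda>n. complex_of_real ((cmod (cinner x (\<phi> n)))\<^sup>2)) sums complex_of_real ((norm w)\<^sup>2)"
    using nw by (simp only: sums_of_real_iff)
  ultimately have zw: "cinner z w = complex_of_real ((norm w)\<^sup>2)" using sums_unique2 by blast
  have "(norm (z - w))\<^sup>2 = (norm z)\<^sup>2 + (norm w)\<^sup>2 - 2 * Re (cinner z w)" by (rule norm_diff_sq)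
  also have "\<dots> = 0" using zw nzw by simp
  finally have "z = w" by simp
  then show ?thesis using w by simp
qed

lemma approx:
  assumes xz: "(x, z) \<in> Sop"
  shows "\<exists>g. (\<forall>k. fst (g k) \<in> D \<and> g k \<in> Sop) \<and> g \<longlonglongrightarrow> (x, z)"
proof -
  have "x \<in> op_dom A" using xz S_dom by (auto simp: op_dom_iff)
  then obtain y where xy: "(x, y) \<in> A" by (auto simp: op_dom_iff)
  obtain h where h: "\<And>n. h n \<in> A0" "h \<longlonglongrightarrow> (x, y)" using xy unfolding A_def closure_sequential by blast
  define xs where "xs = (\<lambda>k. fst (h k))"
  define ys where "ys = (\<lambda>k. snd (h k))"
  have hx: "xs \<longlonglongrightarrow> x" and hy: "ys \<longlonglongrightarrow> y"
    using tendsto_fst[OF h(2)] tendsto_snd[OF h(2)] by (simp_all add: xs_def ys_def)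
  have hk: "(xs k, ys k) \<in> A0" for k using h(1)[of k] by (simp add: xs_def ys_def)
  have xsD: "xs k \<in> D" for k using hk[of k] A0_iff by blast
  have xyA: "(xs k, ys k) \<in> A" for k using A0_A[OF hk[of k]] .
  define zs where "zs k = (SOME z. (xs k, z) \<in> Sop)" for k
  have zsS: "(xs k, zs k) \<in> Sop" for k unfolding zs_def using D_domS[OF xsD] by (rule someI_ex)
  have "dist (zs m) (zs n) = dist (ys m) (ys n)" for m n
    using S_norm[OF op_diff[OF A_op xyA[of m] xyA[of n]] op_diff[OF S_op zsS[of m] zsS[of n]]] by (simp add: dist_norm)
  moreover have "convergent ys" using hy by (rule convergentI)
  ultimately have "Cauchy zs" by (intro Cauchy_transfer[of ys zs]) auto
  then obtain w where zw: "zs \<longlonglongrightarrow> w" using Cauchy_convergent_iff convergent_def by blast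
  have "(\<lambda>k. (xs k, zs k)) \<longlonglongrightarrow> (x, w)" by (rule tendsto_Pair[OF hx zw])
  then have "(x, w) \<in> Sop" by (rule closed_sequentially[OF S_cl zsS])
  then have "w = z" by (rule op_single[OF S_op _ xz])
  then show ?thesis using \<open>(\<lambda>k. (xs k, zs k)) \<longlonglongrightarrow> (x, w)\<close> xsD zsS
    by (intro exI[of _ "\<lambda>k. (xs k, zs k)"]) auto
qed

lemma restrict_eq: "op_restrict (T_op f \<phi>) D = op_restrict Sop D"
proof (intro set_eqI iffI)
  fix p assume "p \<in> op_restrict (T_op f \<phi>) D"
  then obtain x y where p: "p = (x, y)" and xD: "x \<in> D" and s: "(\<lambda>n. cinner x (\<phi> n) *\<^sub>C f n) sums y"
    by (auto simp: op_restrict_def T_op_def)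
  obtain z where xz: "(x, z) \<in> Sop" using D_domS[OF xD] by blast
  have "y = z" using sums_unique2[OF s S_sums[OF xD xz]] .
  then show "p \<in> op_restrict Sop D" using p xz xD by (simp add: op_restrict_def)
next
  fix p assume "p \<in> op_restrict Sop D"
  then obtain x z where p: "p = (x, z)" and xD: "x \<in> D" and xz: "(x, z) \<in> Sop"
    by (auto simp: op_restrict_def)
  show "p \<in> op_restrict (T_op f \<phi>) D"
    using p xD S_sums[OF xD xz] Dphi by (auto simp: op_restrict_def T_op_def)
qed

lemma closure_eq: "op_closure (op_restrict (T_op f \<phi>) D) = Sop"
proof -
  have "closure (op_restrict Sop D) = Sop"
  proof
    show "closure (op_restrict Sop D) \<subseteq> Sop"
      by (rule closure_minimal[OF _ S_cl]) (auto simp: op_restrict_def)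
    show "Sop \<subseteq> closure (op_restrict Sop D)"
    proof
      fix p assume pS: "p \<in> Sop"
      obtain x z where p: "p = (x, z)" by fastforce
      obtain g where g: "\<And>k. fst (g k) \<in> D \<and> g k \<in> Sop" "g \<longlonglongrightarrow> (x, z)" using approx pS p by blast
      have "g k \<in> op_restrict Sop D" for k using g(1)[of k] by (cases "g k") (auto simp: op_restrict_def)
      then show "p \<in> closure (op_restrict Sop D)" unfolding closure_sequential p using g(2) by blast
    qed
  qed
  then show ?thesis by (simp add: op_closure_def restrict_eq)
qed

lemma orth_range_zero:
  assumes h: "\<And>x z. (x, z) \<in> Sop \<Longrightarrow> cinner z h = 0"
  shows "h = 0"
proof -
  have "(h, 0) \<in> adjoint Sop" using h by (simp add: adjoint_iff)
  then have "(h, 0) \<in> Sop" using S_adj by simp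
  then show ?thesis by (rule S_inj)
qed

lemma range_dense: "dense_set (op_range Sop)"
proof -
  have cs: "csubspace (op_range Sop)"
  proof -
    have "0 \<in> op_range Sop" using op_zero[OF S_op] by (auto simp: op_range_iff)
    moreover have "a + b \<in> op_range Sop" if "a \<in> op_range Sop" "b \<in> op_range Sop" for a b
    proof -
      obtain u v where "(u, a) \<in> Sop" "(v, b) \<in> Sop" using \<open>a \<in> op_range Sop\<close> \<open>b \<in> op_range Sop\<close>
        by (auto simp: op_range_iff)
      then have "(u + v, a + b) \<in> Sop" by (rule op_add[OF S_op])
      then show ?thesis by (auto simp: op_range_iff)
    qed
    moreover have "c *\<^sub>C a \<in> op_range Sop" if "a \<in> op_range Sop" for c a
    proof -
      obtain u where "(u, a) \<in> Sop" using \<open>a \<in> op_range Sop\<close> by (auto simp: op_range_iff)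
      then have "(c *\<^sub>C u, c *\<^sub>C a) \<in> Sop" by (rule op_scale[OF S_op])
      then show ?thesis by (auto simp: op_range_iff)
    qed
    ultimately show ?thesis unfolding csubspace_def by blast
  qed
  show ?thesis unfolding dense_set_def
  proof (rule dense_if_orth[OF cs])
    fix h assume "\<And>m. m \<in> op_range Sop \<Longrightarrow> cinner m h = 0"
    then show "h = 0" by (intro orth_range_zero) (auto simp: op_range_iff)
  qed
qed

lemma f_onb: "orthonormal_basis f"
  unfolding orthonormal_basis_def
proof
  show "\<forall>n m. cinner (f n) (f m) = (if n = m then 1 else 0)" using f_orthon by (simp add: orthon_def)
  show "dense_set (cspan (range f))" unfolding dense_set_def
  proof (rule dense_if_orth[OF cspan_csubspace])
    fix h assume o: "\<And>m. m \<in> cspan (range f) \<Longrightarrow> cinner m h = 0"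
    have fh: "cinner (f n) h = 0" for n using o cspan_single[of "f n" "range f"] by blast
    have Dz: "cinner z h = 0" if xD: "x \<in> D" and xz: "(x, z) \<in> Sop" for x z
    proof -
      have "(\<lambda>n. cinner (cinner x (\<phi> n) *\<^sub>C f n) h) sums cinner z h"
        by (rule sums_cinner_left[OF S_sums[OF xD xz]])
      moreover have "(\<lambda>n. cinner (cinner x (\<phi> n) *\<^sub>C f n) h) = (\<lambda>n. 0)"
        by (simp add: cinner_scaleC_left fh)
      ultimately have "(\<lambda>n. 0) sums cinner z h" by simp
      then show ?thesis using sums_zero sums_unique2 by blast
    qed
    show "h = 0"
    proof (rule orth_range_zero)
      fix x z assume xz: "(x, z) \<in> Sop"
      obtain g where g: "\<And>k. fst (g k) \<in> D \<and> g k \<in> Sop" "g \<longlonglongrightarrow> (x, z)" using approx[OF xz] by blast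
      have "(\<lambda>k. cinner (snd (g k)) h) \<longlonglongrightarrow> cinner z h"
        using tendsto_snd[OF g(2)] by (intro tendsto_intros) simp
      moreover have "cinner (snd (g k)) h = 0" for k
        using Dz[of "fst (g k)" "snd (g k)"] g(1)[of k] by simp
      ultimately have "(\<lambda>k. 0) \<longlonglongrightarrow> cinner z h" by simp
      then show "cinner z h = 0" using LIMSEQ_unique tendsto_const by blast
    qed
  qed
qed

lemma f_phi: "(f n, \<phi> n) \<in> Sop"
proof -
  have "(f n, \<phi> n) \<in> adjoint Sop"
    unfolding adjoint_iff
  proof (intro allI impI)
    fix x w assume xw: "(x, w) \<in> Sop"
    obtain g where g: "\<And>k. fst (g k) \<in> D \<and> g k \<in> Sop" "g \<longlonglongrightarrow> (x, w)" using approx[OF xw] by blast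
    have a: "(\<lambda>k. cinner (snd (g k)) (f n)) \<longlonglongrightarrow> cinner w (f n)"
      using tendsto_snd[OF g(2)] by (intro tendsto_intros) simp
    have b: "(\<lambda>k. cinner (fst (g k)) (\<phi> n)) \<longlonglongrightarrow> cinner x (\<phi> n)"
      using tendsto_fst[OF g(2)] by (intro tendsto_intros) simp
    have "cinner (snd (g k)) (f n) = cinner (fst (g k)) (\<phi> n)" for k
      using S_coef[of "fst (g k)" "snd (g k)"] g(1)[of k] by simp
    then have "(\<lambda>k. cinner (fst (g k)) (\<phi> n)) \<longlonglongrightarrow> cinner w (f n)" using a by simp
    then show "cinner w (f n) = cinner x (\<phi> n)" using b by (rule LIMSEQ_unique)
  qed
  then show ?thesis using S_adj by simp
qed

lemma S_dense: "densely_defined Sop"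
  using A_dense S_dom by (simp add: densely_defined_def)

lemma Sinv_op: "is_operator (op_inverse Sop)"
  by (rule inverse_is_operator[OF S_op S_inj])

lemma Sinv_dense: "densely_defined (op_inverse Sop)"
  using range_dense by (simp add: densely_defined_def op_dom_inverse)

lemma f_dom: "f n \<in> op_dom Sop" using f_phi by (auto simp: op_dom_iff)
lemma f_range: "f n \<in> op_range Sop" using f_S by (auto simp: op_range_iff)

lemma cp_phi: "constructing_pair \<phi> f Sop"
  unfolding constructing_pair_def
proof (intro conjI allI)
  show "orthonormal_basis f" by (rule f_onb)
  show "closed_operator Sop" using S_op S_cl by (simp add: closed_operator_def)
  show "densely_defined Sop" by (rule S_dense)
  show "is_operator (op_inverse Sop)" by (rule Sinv_op)
  show "densely_defined (op_inverse Sop)" by (rule Sinv_dense)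
  fix n
  show "f n \<in> op_dom Sop \<inter> op_dom (adjoint (op_inverse Sop))"
    using f_dom f_range by (simp add: adjoint_inverse S_adj op_dom_inverse)
  show "(f n, \<phi> n) \<in> Sop" by (rule f_phi)
qed

lemma cp_psi: "constructing_pair \<psi> f (op_inverse Sop)"
  unfolding constructing_pair_def
proof (intro conjI allI)
  show "orthonormal_basis f" by (rule f_onb)
  show "closed_operator (op_inverse Sop)" using Sinv_op closed_inverse[OF S_cl] by (simp add: closed_operator_def)
  show "densely_defined (op_inverse Sop)" by (rule Sinv_dense)
  show "is_operator (op_inverse (op_inverse Sop))" using S_op by simp
  show "densely_defined (op_inverse (op_inverse Sop))" using S_dense by simp
  fix n
  show "f n \<in> op_dom (op_inverse Sop) \<inter> op_dom (adjoint (op_inverse (op_inverse Sop)))"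
    using f_dom f_range by (simp add: S_adj op_dom_inverse)
  show "(f n, \<psi> n) \<in> op_inverse Sop" using f_S by simp
qed

lemma final:
  "\<exists>f. orthonormal_basis f \<and>
           self_adjoint (op_closure (op_restrict (T_op f \<phi>) D)) \<and>
           positive_op (op_closure (op_restrict (T_op f \<phi>) D)) \<and>
           constructing_pair \<phi> f (op_closure (op_restrict (T_op f \<phi>) D)) \<and>
           generalized_riesz_system \<phi> \<and>
           constructing_pair \<psi> f (op_inverse (op_closure (op_restrict (T_op f \<phi>) D))) \<and>
           generalized_riesz_system \<psi>"
proof (intro exI[of _ f] conjI)
  show "orthonormal_basis f" by (rule f_onb)
  show "self_adjoint (op_closure (op_restrict (T_op f \<phi>) D))" unfolding closure_eq by (rule S_sa)
  show "positive_op (op_closure (op_restrict (T_op f \<phi>) D))" unfolding closure_eq by (rule S_pos)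
  show "constructing_pair \<phi> f (op_closure (op_restrict (T_op f \<phi>) D))" unfolding closure_eq by (rule cp_phi)
  show "generalized_riesz_system \<phi>" unfolding generalized_riesz_system_def using cp_phi by blast
  show "constructing_pair \<psi> f (op_inverse (op_closure (op_restrict (T_op f \<phi>) D)))"
    unfolding closure_eq by (rule cp_psi)
  show "generalized_riesz_system \<psi>" unfolding generalized_riesz_system_def using cp_psi by blast
qed

end

theorem proposition4p4:
  fixes \<phi> \<psi> :: "nat \<Rightarrow> 'a::{chilbert_space, second_countable_topology}"
    and D E :: "'a set"
  assumes "biorthogonal \<phi> \<psi>"
    and "csubspace D" and "dense_set D"
    and "csubspace E" and "dense_set E"
    and "quasi_basis \<phi> \<psi> D E"
    and "cspan (range \<psi>) \<subseteq> D" and "D \<subseteq> seq_domain \<phi>"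
    and "cspan (range \<phi>) \<subseteq> E" and "E \<subseteq> seq_domain \<psi>"
  shows "\<exists>f. orthonormal_basis f \<and>
           self_adjoint (op_closure (op_restrict (T_op f \<phi>) D)) \<and>
           positive_op (op_closure (op_restrict (T_op f \<phi>) D)) \<and>
           constructing_pair \<phi> f (op_closure (op_restrict (T_op f \<phi>) D)) \<and>
           generalized_riesz_system \<phi> \<and>
           constructing_pair \<psi> f (op_inverse (op_closure (op_restrict (T_op f \<phi>) D))) \<and>
           generalized_riesz_system \<psi>"
proof -
  interpret mainloc \<phi> \<psi> D E using assms by unfold_locales
  show ?thesis by (rule final)
qed


end
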